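(* Let $S$ and $R$ be local rings with finite ideals $I_S\subset S$, $I_R\subset R$ such that $S/I_S\cong R/I_R\cong\mathbb Z_p$, and let $S\twoheadrightarrow R$ be a surjection with finite nonzero kernel $J$. Let $\tilde\Phi\subset\mathrm{GL}_2(\mathbb Z_p)$ be a finite subgroup of order prime to $p$ and let $\tilde\Gamma\subset\mathrm{GL}_2(R)$ be its inverse image under $\mathrm{GL}_2(R)\to\mathrm{GL}_2(\mathbb Z_p)$ (so $1\to 1+M_2(I_R)\to\tilde\Gamma\to\tilde\Phi\to1$). If $\Gamma_J\subset[\Gamma_S,\Gamma_S]\Gamma_S^p$, then there is no lift $\tilde\Gamma\to\mathrm{GL}_2(S)$.
   Context: For an ideal $I\subset S$, $\Gamma_I=1+M_2(I)$ and $\Gamma_S=1+M_2(I_S)$. A lift $\tilde\Gamma\to\mathrm{GL}_2(S)$ means a group homomorphism whose composition with $\mathrm{GL}_2(S)\to\mathrm{GL}_2(R)$ is the inclusion $\tilde\Gamma\subset\mathrm{GL}_2(R)$. *)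

theory Defs
  imports "HOL-Algebra.Algebra"
begin

definition Zp :: "nat \<Rightarrow> (nat \<Rightarrow> int) ring" where
  "Zp p = \<lparr> carrier = {x. \<forall>n. 0 \<le> x n \<and> x n < int p ^ n \<and> x (Suc n) mod (int p ^ n) = x n},
            Group.monoid.mult = (\<lambda>x y n. (x n * y n) mod (int p ^ n)),
            Group.monoid.one = (\<lambda>n. 1 mod (int p ^ n)),
            Ring.ring.zero = (\<lambda>n. 0),
            Ring.ring.add = (\<lambda>x y n. (x n + y n) mod (int p ^ n)) \<rparr>"

definition local_ring :: "('a, 'b) ring_scheme \<Rightarrow> bool" where
  "local_ring R \<longleftrightarrow> cring R \<and> (\<exists>!m. maximalideal m R)"

type_synonym 'a mat2 = "'a \<times> 'a \<times> 'a \<times> 'a"  \<comment> \<open>(a,b,c,d) = [[a,b],[c,d]]\<close>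

fun m2mult :: "('a, 'b) ring_scheme \<Rightarrow> 'a mat2 \<Rightarrow> 'a mat2 \<Rightarrow> 'a mat2" where
  "m2mult R (a, b, c, d) (e, f, g, h) =
     (a \<otimes>\<^bsub>R\<^esub> e \<oplus>\<^bsub>R\<^esub> b \<otimes>\<^bsub>R\<^esub> g, a \<otimes>\<^bsub>R\<^esub> f \<oplus>\<^bsub>R\<^esub> b \<otimes>\<^bsub>R\<^esub> h,
      c \<otimes>\<^bsub>R\<^esub> e \<oplus>\<^bsub>R\<^esub> d \<otimes>\<^bsub>R\<^esub> g, c \<otimes>\<^bsub>R\<^esub> f \<oplus>\<^bsub>R\<^esub> d \<otimes>\<^bsub>R\<^esub> h)"

fun m2det :: "('a, 'b) ring_scheme \<Rightarrow> 'a mat2 \<Rightarrow> 'a" where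
  "m2det R (a, b, c, d) = a \<otimes>\<^bsub>R\<^esub> d \<ominus>\<^bsub>R\<^esub> b \<otimes>\<^bsub>R\<^esub> c"

fun m2map :: "('a \<Rightarrow> 'c) \<Rightarrow> 'a mat2 \<Rightarrow> 'c mat2" where
  "m2map g (a, b, c, d) = (g a, g b, g c, g d)"

definition GL2 :: "('a, 'b) ring_scheme \<Rightarrow> 'a mat2 monoid" where
  "GL2 R = \<lparr> carrier = {(a, b, c, d). a \<in> carrier R \<and> b \<in> carrier R \<and> c \<in> carrier R \<and> d \<in> carrier R
                          \<and> m2det R (a, b, c, d) \<in> Units R},
             Group.monoid.mult = m2mult R,
             Group.monoid.one = (\<one>\<^bsub>R\<^esub>, \<zero>\<^bsub>R\<^esub>, \<zero>\<^bsub>R\<^esub>, \<one>\<^bsub>R\<^esub>) \<rparr>"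

definition congr_sub :: "('a, 'b) ring_scheme \<Rightarrow> 'a set \<Rightarrow> 'a mat2 set" where
  "congr_sub R I = {(\<one>\<^bsub>R\<^esub> \<oplus>\<^bsub>R\<^esub> a, b, c, \<one>\<^bsub>R\<^esub> \<oplus>\<^bsub>R\<^esub> d) | a b c d. a \<in> I \<and> b \<in> I \<and> c \<in> I \<and> d \<in> I}"

definition comm_pow_sub :: "('a, 'b) monoid_scheme \<Rightarrow> 'a set \<Rightarrow> nat \<Rightarrow> 'a set" where
  "comm_pow_sub G H p = generate G (derived_set G H \<union> {h [^]\<^bsub>G\<^esub> p | h. h \<in> H})"

end

theory Submission
  imports Defs
begin


lemma (in cring) krull:
  assumes "ideal I R" "\<one> \<notin> I"
  shows "\<exists>M. maximalideal M R \<and> I \<subseteq> M"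
proof -
  define A where "A = {K. ideal K R \<and> I \<subseteq> K \<and> \<one> \<notin> K}"
  have "\<exists>M\<in>A. \<forall>K1\<in>A. M \<subseteq> K1 \<longrightarrow> K1 = M"
  proof (rule subset_Zorn)
    fix C assume C: "subset.chain A C"
    show "\<exists>U\<in>A. \<forall>K1\<in>C. K1 \<subseteq> U"
    proof (cases "C = {}")
      case True then show ?thesis using assms by (auto simp: A_def)
    next
      case False
      then obtain K0 where K0: "K0 \<in> C" by auto
      have CA: "C \<subseteq> A" using C by (auto simp: subset.chain_def)
      hence CA': "\<And>K1. K1 \<in> C \<Longrightarrow> ideal K1 R \<and> I \<subseteq> K1 \<and> \<one> \<notin> K1" by (auto simp: A_def)
      have ch: "\<And>K1 K2. K1 \<in> C \<Longrightarrow> K2 \<in> C \<Longrightarrow> K1 \<subseteq> K2 \<or> K2 \<subseteq> K1"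
        using C by (auto simp: subset.chain_def)
      have sub: "\<Union>C \<subseteq> carrier R" proof (rule Union_least) fix K assume "K \<in> C" then show "K \<subseteq> carrier R" using CA' additive_subgroup.a_subset[OF ideal.axioms(1)] by blast qed
      have "ideal (\<Union>C) R"
      proof (rule idealI)
        show "ring R" by (rule ring_axioms)
        show "subgroup (\<Union>C) (add_monoid R)"
        proof (rule add.subgroupI)
          show "\<Union>C \<subseteq> carrier R" using sub by simp
          have "\<zero> \<in> K0" using CA'[OF K0] by (simp add: ideal.axioms(1) additive_subgroup.zero_closed)
          then show "\<Union>C \<noteq> {}" using K0 by blast
          fix a assume "a \<in> \<Union>C"
          then obtain K1 where K1: "K1 \<in> C" "a \<in> K1" by auto
          have "\<ominus> a \<in> K1" using CA'[OF K1(1)] K1(2) by (simp add: ideal.axioms(1) additive_subgroup.a_inv_closed)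
          then show "\<ominus> a \<in> \<Union>C" using K1 by blast
        next
          fix a b assume "a \<in> \<Union>C" "b \<in> \<Union>C"
          then obtain K1 K2 where XY: "K1 \<in> C" "a \<in> K1" "K2 \<in> C" "b \<in> K2" by auto
          show "a \<oplus> b \<in> \<Union>C"
          proof (cases "K1 \<subseteq> K2")
            case True
            then have "a \<oplus> b \<in> K2" using XY CA'[OF XY(3)] by (simp add: subsetD ideal.axioms(1) additive_subgroup.a_closed)
            then show ?thesis using XY by blast
          next
            case False
            then have "K2 \<subseteq> K1" using ch XY by blast
            then have "a \<oplus> b \<in> K1" using XY CA'[OF XY(1)] by (simp add: subsetD ideal.axioms(1) additive_subgroup.a_closed)
            then show ?thesis using XY by blast
          qed
        qed
      next
        fix a x assume "a \<in> \<Union>C" "x \<in> carrier R"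
        then obtain K1 where K1: "K1 \<in> C" "a \<in> K1" by auto
        have "x \<otimes> a \<in> K1" using CA'[OF K1(1)] K1(2) \<open>x \<in> carrier R\<close> by (simp add: ideal.I_l_closed)
        then show "x \<otimes> a \<in> \<Union>C" using K1 by blast
      next
        fix a x assume "a \<in> \<Union>C" "x \<in> carrier R"
        then obtain K1 where K1: "K1 \<in> C" "a \<in> K1" by auto
        have "a \<otimes> x \<in> K1" using CA'[OF K1(1)] K1(2) \<open>x \<in> carrier R\<close> by (simp add: ideal.I_r_closed)
        then show "a \<otimes> x \<in> \<Union>C" using K1 by blast
      qed
      moreover have "I \<subseteq> \<Union>C" using CA'[OF K0] K0 by blast
      moreover have "\<one> \<notin> \<Union>C" using CA' by blast
      ultimately have "\<Union>C \<in> A" by (simp add: A_def)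
      then show ?thesis by blast
    qed
  qed
  then obtain M where M: "ideal M R" "I \<subseteq> M" "\<one> \<notin> M" and mx: "\<And>K1. K1 \<in> A \<Longrightarrow> M \<subseteq> K1 \<Longrightarrow> K1 = M"
    by (auto simp: A_def)
  have "maximalideal M R"
  proof (rule maximalidealI)
    show "ideal M R" by fact
    show "carrier R \<noteq> M" using M by auto
    fix K assume K: "ideal K R" "M \<subseteq> K" "K \<subseteq> carrier R"
    show "K = M \<or> K = carrier R"
    proof (cases "\<one> \<in> K")
      case True then show ?thesis using K by (auto dest: ideal.one_imp_carrier)
    next
      case False then show ?thesis using K M mx[of K] by (auto simp: A_def)
    qed
  qed
  then show ?thesis using M by auto
qed


lemma local_cring: "local_ring S \<Longrightarrow> cring S" by (simp add: local_ring_def)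

context cring begin

lemma local_max_unique:
  assumes "local_ring R" "maximalideal m R" "maximalideal m' R" shows "m' = m"
proof -
  have "\<exists>!m. maximalideal m R" using assms(1) by (simp add: local_ring_def)
  then show ?thesis using assms(2,3) by blast
qed

lemma local_proper_sub:
  assumes "local_ring R" "maximalideal m R" "ideal I R" "\<one> \<notin> I"
  shows "I \<subseteq> m"
proof -
  obtain M where "maximalideal M R" "I \<subseteq> M" using krull assms by blast
  then show ?thesis using local_max_unique[OF assms(1,2)] by blast
qed

lemma local_nonunit:
  assumes "local_ring R" "maximalideal m R" "x \<in> carrier R" "x \<notin> Units R"
  shows "x \<in> m"
proof -
  have "\<one> \<notin> PIdl x"
  proof
    assume "\<one> \<in> PIdl x"
    then obtain y where y: "y \<in> carrier R" "\<one> = y \<otimes> x" by (auto simp: cgenideal_def)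
    then have "x \<otimes> y = \<one>" using assms(3) m_comm[of x y] by simp
    then have "x \<in> Units R" using y assms(3) by (auto simp: Units_def)
    then show False using assms by blast
  qed
  then have "PIdl x \<subseteq> m" using local_proper_sub[OF assms(1,2)] cgenideal_ideal[OF assms(3)] by blast
  then show ?thesis using cgenideal_self[OF assms(3)] by blast
qed

lemma max_one_notin: assumes "maximalideal m R" shows "\<one> \<notin> m"
proof
  assume "\<one> \<in> m"
  interpret mi: maximalideal m R by fact
  have "m = carrier R" using mi.one_imp_carrier \<open>\<one> \<in> m\<close> by blast
  then show False using mi.I_notcarr by simp
qed

lemma local_unit_minus:
  assumes "local_ring R" "maximalideal m R" "a \<in> m" "s \<in> carrier R"
  shows "\<one> \<ominus> s \<otimes> a \<in> Units R"
proof (rule ccontr)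
  interpret mi: maximalideal m R by fact
  assume nu: "\<one> \<ominus> s \<otimes> a \<notin> Units R"
  have ac: "a \<in> carrier R" using assms(3) mi.Icarr by blast
  have cc: "\<one> \<ominus> s \<otimes> a \<in> carrier R" using ac assms(4) by simp
  have h1: "\<one> \<ominus> s \<otimes> a \<in> m" using local_nonunit[OF assms(1,2) cc nu] .
  have h2: "s \<otimes> a \<in> m" using mi.I_l_closed[OF assms(3,4)] .
  have "(\<one> \<ominus> s \<otimes> a) \<oplus> s \<otimes> a \<in> m" using mi.a_closed[OF h1 h2] .
  moreover have "(\<one> \<ominus> s \<otimes> a) \<oplus> s \<otimes> a = \<one>" using ac assms(4) by algebra
  ultimately have "\<one> \<in> m" by simp
  then show False using max_one_notin[OF assms(2)] by simp
qed

lemma local_unit_plus: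
  assumes "local_ring R" "maximalideal m R" "a \<in> m"
  shows "\<one> \<oplus> a \<in> Units R"
proof -
  interpret mi: maximalideal m R by fact
  have ac: "a \<in> carrier R" using assms(3) mi.Icarr by blast
  have "\<one> \<oplus> a = \<one> \<ominus> (\<ominus> \<one>) \<otimes> a" using ac by algebra
  then show ?thesis using local_unit_minus[OF assms, of "\<ominus> \<one>"] by simp
qed

end

lemma GL2_mem: "(a,b,c,d) \<in> carrier (GL2 R) \<longleftrightarrow> a \<in> carrier R \<and> b \<in> carrier R \<and> c \<in> carrier R \<and> d \<in> carrier R
   \<and> a \<otimes>\<^bsub>R\<^esub> d \<ominus>\<^bsub>R\<^esub> b \<otimes>\<^bsub>R\<^esub> c \<in> Units R"
  by (simp add: GL2_def)

lemma GL2_mult: "(a,b,c,d) \<otimes>\<^bsub>GL2 R\<^esub> (e,f,g,h) = m2mult R (a,b,c,d) (e,f,g,h)"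
  by (simp add: GL2_def)

lemma GL2_one: "\<one>\<^bsub>GL2 R\<^esub> = (\<one>\<^bsub>R\<^esub>, \<zero>\<^bsub>R\<^esub>, \<zero>\<^bsub>R\<^esub>, \<one>\<^bsub>R\<^esub>)"
  by (simp add: GL2_def)

context cring begin

lemma GL2_group: "group (GL2 R)"
proof (rule groupI)
  fix x y assume "x \<in> carrier (GL2 R)" "y \<in> carrier (GL2 R)"
  then obtain a b c d e f g h where xy: "x = (a,b,c,d)" "y = (e,f,g,h)"
    and c: "a \<in> carrier R" "b \<in> carrier R" "c \<in> carrier R" "d \<in> carrier R"
      "e \<in> carrier R" "f \<in> carrier R" "g \<in> carrier R" "h \<in> carrier R"
    and u: "a \<otimes> d \<ominus> b \<otimes> c \<in> Units R" "e \<otimes> h \<ominus> f \<otimes> g \<in> Units R"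
    by (cases x; cases y) (auto simp: GL2_mem)
  have "(a \<otimes> e \<oplus> b \<otimes> g) \<otimes> (c \<otimes> f \<oplus> d \<otimes> h) \<ominus> (a \<otimes> f \<oplus> b \<otimes> h) \<otimes> (c \<otimes> e \<oplus> d \<otimes> g)
     = (a \<otimes> d \<ominus> b \<otimes> c) \<otimes> (e \<otimes> h \<ominus> f \<otimes> g)" using c by algebra
  then show "x \<otimes>\<^bsub>GL2 R\<^esub> y \<in> carrier (GL2 R)" using xy c u by (simp add: GL2_mult GL2_mem)
next
  show "\<one>\<^bsub>GL2 R\<^esub> \<in> carrier (GL2 R)" by (simp add: GL2_one GL2_mem minus_eq)
next
  fix x y z assume "x \<in> carrier (GL2 R)" "y \<in> carrier (GL2 R)" "z \<in> carrier (GL2 R)"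
  then obtain a b c d e f g h i j k l where xy: "x = (a,b,c,d)" "y = (e,f,g,h)" "z = (i,j,k,l)"
    and c: "a \<in> carrier R" "b \<in> carrier R" "c \<in> carrier R" "d \<in> carrier R"
      "e \<in> carrier R" "f \<in> carrier R" "g \<in> carrier R" "h \<in> carrier R"
      "i \<in> carrier R" "j \<in> carrier R" "k \<in> carrier R" "l \<in> carrier R"
    by (cases x; cases y; cases z) (auto simp: GL2_mem)
  show "x \<otimes>\<^bsub>GL2 R\<^esub> y \<otimes>\<^bsub>GL2 R\<^esub> z = x \<otimes>\<^bsub>GL2 R\<^esub> (y \<otimes>\<^bsub>GL2 R\<^esub> z)"
    unfolding xy GL2_mult m2mult.simps GL2_mult[symmetric] unfolding GL2_mult m2mult.simps prod.inject
  proof (intro conjI)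
    show "(a \<otimes> e \<oplus> b \<otimes> g) \<otimes> i \<oplus> (a \<otimes> f \<oplus> b \<otimes> h) \<otimes> k = a \<otimes> (e \<otimes> i \<oplus> f \<otimes> k) \<oplus> b \<otimes> (g \<otimes> i \<oplus> h \<otimes> k)"
      using c by algebra
    show "(a \<otimes> e \<oplus> b \<otimes> g) \<otimes> j \<oplus> (a \<otimes> f \<oplus> b \<otimes> h) \<otimes> l = a \<otimes> (e \<otimes> j \<oplus> f \<otimes> l) \<oplus> b \<otimes> (g \<otimes> j \<oplus> h \<otimes> l)"
      using c by algebra
    show "(c \<otimes> e \<oplus> d \<otimes> g) \<otimes> i \<oplus> (c \<otimes> f \<oplus> d \<otimes> h) \<otimes> k = c \<otimes> (e \<otimes> i \<oplus> f \<otimes> k) \<oplus> d \<otimes> (g \<otimes> i \<oplus> h \<otimes> k)"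
      using c by algebra
    show "(c \<otimes> e \<oplus> d \<otimes> g) \<otimes> j \<oplus> (c \<otimes> f \<oplus> d \<otimes> h) \<otimes> l = c \<otimes> (e \<otimes> j \<oplus> f \<otimes> l) \<oplus> d \<otimes> (g \<otimes> j \<oplus> h \<otimes> l)"
      using c by algebra
  qed
next
  fix x assume "x \<in> carrier (GL2 R)"
  then obtain a b c d where xy: "x = (a,b,c,d)"
    and c: "a \<in> carrier R" "b \<in> carrier R" "c \<in> carrier R" "d \<in> carrier R"
    by (cases x) (auto simp: GL2_mem)
  show "\<one>\<^bsub>GL2 R\<^esub> \<otimes>\<^bsub>GL2 R\<^esub> x = x" unfolding xy GL2_one GL2_mult using c by simp
next
  fix x assume "x \<in> carrier (GL2 R)"
  then obtain a b c d where xy: "x = (a,b,c,d)"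
    and c: "a \<in> carrier R" "b \<in> carrier R" "c \<in> carrier R" "d \<in> carrier R"
    and u: "a \<otimes> d \<ominus> b \<otimes> c \<in> Units R"
    by (cases x) (auto simp: GL2_mem)
  define v where "v = inv (a \<otimes> d \<ominus> b \<otimes> c)"
  have v: "v \<in> carrier R" "v \<otimes> (a \<otimes> d \<ominus> b \<otimes> c) = \<one>" using u by (auto simp: v_def)
  have vu: "v \<in> Units R" using u by (simp add: v_def)
  let ?y = "(v \<otimes> d, \<ominus> (v \<otimes> b), \<ominus> (v \<otimes> c), v \<otimes> a)"
  have e1: "v \<otimes> d \<otimes> a \<oplus> \<ominus> (v \<otimes> b) \<otimes> c = v \<otimes> (a \<otimes> d \<ominus> b \<otimes> c)" using c v(1) by algebra
  have e2: "v \<otimes> d \<otimes> b \<oplus> \<ominus> (v \<otimes> b) \<otimes> d = \<zero>" using c v(1) by algebra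
  have e3: "\<ominus> (v \<otimes> c) \<otimes> a \<oplus> v \<otimes> a \<otimes> c = \<zero>" using c v(1) by algebra
  have e4: "\<ominus> (v \<otimes> c) \<otimes> b \<oplus> v \<otimes> a \<otimes> d = v \<otimes> (a \<otimes> d \<ominus> b \<otimes> c)" using c v(1) by algebra
  have e5: "v \<otimes> d \<otimes> (v \<otimes> a) \<ominus> \<ominus> (v \<otimes> b) \<otimes> \<ominus> (v \<otimes> c) = v \<otimes> (v \<otimes> (a \<otimes> d \<ominus> b \<otimes> c))" using c v(1) by algebra
  have det_y: "v \<otimes> d \<otimes> (v \<otimes> a) \<ominus> \<ominus> (v \<otimes> b) \<otimes> \<ominus> (v \<otimes> c) = v"
  proof -
    have "v \<otimes> (v \<otimes> (a \<otimes> d \<ominus> b \<otimes> c)) = v" using v by (simp only: v(2) r_one)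
    then show ?thesis by (rule trans[OF e5])
  qed
  have "?y \<in> carrier (GL2 R)" unfolding GL2_mem det_y using c v vu by auto
  moreover have "?y \<otimes>\<^bsub>GL2 R\<^esub> x = \<one>\<^bsub>GL2 R\<^esub>" unfolding xy GL2_mult GL2_one m2mult.simps
    by (simp only: e1 e2 e3 e4 v(2))
  ultimately show "\<exists>y \<in> carrier (GL2 R). y \<otimes>\<^bsub>GL2 R\<^esub> x = \<one>\<^bsub>GL2 R\<^esub>" by blast
qed

end


lemma Zp_carrier: "x \<in> carrier (Zp p) \<longleftrightarrow> (\<forall>n. 0 \<le> x n \<and> x n < int p ^ n \<and> x (Suc n) mod (int p ^ n) = x n)"
  by (simp add: Zp_def)
lemma Zp_zero: "\<zero>\<^bsub>Zp p\<^esub> = (\<lambda>n. 0)" by (simp add: Zp_def)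
lemma Zp_one: "\<one>\<^bsub>Zp p\<^esub> = (\<lambda>n. 1 mod (int p ^ n))" by (simp add: Zp_def)
lemma Zp_add: "x \<oplus>\<^bsub>Zp p\<^esub> y = (\<lambda>n. (x n + y n) mod (int p ^ n))" by (simp add: Zp_def)
lemma Zp_mult: "x \<otimes>\<^bsub>Zp p\<^esub> y = (\<lambda>n. (x n * y n) mod (int p ^ n))" by (simp add: Zp_def)

lemma Zp_add_pow: "([n] \<cdot>\<^bsub>Zp p\<^esub> z) = (\<lambda>k. (int n * z k) mod (int p ^ k))"
proof (induction n)
  case 0
  then show ?case by (simp add: add_pow_def Zp_def)
next
  case (Suc n)
  have "([Suc n] \<cdot>\<^bsub>Zp p\<^esub> z) = ([n] \<cdot>\<^bsub>Zp p\<^esub> z) \<oplus>\<^bsub>Zp p\<^esub> z"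
    by (simp add: add_pow_def Zp_def)
  also have "\<dots> = (\<lambda>k. (int (Suc n) * z k) mod (int p ^ k))"
    unfolding Suc Zp_add by (rule ext) (simp add: mod_add_left_eq mod_add_right_eq algebra_simps)
  finally show ?case .
qed

lemma Zp_ring:
  assumes "ring Q" "\<phi> \<in> ring_iso Q (Zp p)"
  shows "ring (Zp p)"
proof -
  let ?Z = "(Zp p)\<lparr>zero := \<phi> \<zero>\<^bsub>Q\<^esub>\<rparr>"
  have r: "ring ?Z" using ring.ring_iso_imp_img_ring[OF assms] .
  interpret Z: ring ?Z by (rule r)
  let ?e = "(\<lambda>n::nat. 0::int)"
  have pp: "int p ^ n > 0" if "p > 0" for n using that by simp
  have ec: "?e \<in> carrier ?Z"
  proof -
    have "p \<noteq> 0"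
    proof
      assume "p = 0"
      have "carrier (Zp p) = {}"
      proof -
        { fix x assume "x \<in> carrier (Zp p)"
          then have "0 \<le> x 1 \<and> x 1 < int p ^ 1" unfolding Zp_carrier by blast
          then have "0 \<le> x 1 \<and> x 1 < 0" using \<open>p = 0\<close> by simp
          then have False by linarith }
        then show ?thesis by blast
      qed
      then have "carrier ?Z = {}" by simp
      then show False using Z.zero_closed by blast
    qed
    then show ?thesis by (simp add: Zp_def)
  qed
  have "?e \<oplus>\<^bsub>?Z\<^esub> ?e = ?e" by (simp add: Zp_def)
  then have "?e = \<zero>\<^bsub>?Z\<^esub>" using ec by (metis Z.l_zero Z.add.l_cancel Z.zero_closed Z.r_zero)
  then have "\<phi> \<zero>\<^bsub>Q\<^esub> = ?e" by simp
  then have "?Z = Zp p" by (simp add: Zp_def)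
  then show ?thesis using r by simp
qed

lemma Zp_iter:
  assumes "z \<in> carrier (Zp p)" shows "z (k + e) mod (int p ^ k) = z k"
proof (induction e)
  case 0
  have "0 \<le> z k \<and> z k < int p ^ k" using assms unfolding Zp_carrier by blast
  then show ?case by simp
next
  case (Suc e)
  have "z (k + Suc e) mod (int p ^ k) = (z (Suc (k + e)) mod (int p ^ (k + e))) mod (int p ^ k)"
    by (simp add: mod_mod_cancel le_imp_power_dvd)
  also have "\<dots> = z (k + e) mod (int p ^ k)" using assms unfolding Zp_carrier by simp
  finally show ?case using Suc by simp
qed

lemma Zp_torsion_aux:
  assumes "Factorial_Ring.prime p" "z \<in> carrier (Zp p)"
  shows "n > 0 \<Longrightarrow> (\<forall>k. (int n * z k) mod (int p ^ k) = 0) \<Longrightarrow> z k = 0"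
proof (induction n arbitrary: k rule: less_induct)
  case (less n)
  show ?case
  proof (cases "p dvd n")
    case True
    then obtain n' where n': "n = p * n'" by blast
    have p1: "p > 1" using assms(1) prime_gt_1_nat by blast
    have "n' > 0" using less.prems n' by (cases n') auto
    have "n' < n" using n' p1 \<open>n' > 0\<close> by simp
    have "\<forall>k. (int n' * z k) mod (int p ^ k) = 0"
    proof
      fix k
      have "(int n * z (Suc k)) mod (int p ^ Suc k) = 0" using less.prems(2) by blast
      then have "int p * int p ^ k dvd int p * (int n' * z (Suc k))" by (simp add: n' mod_eq_0_iff_dvd mult.assoc)
      then have d1: "int p ^ k dvd int n' * z (Suc k)" using p1 by simp
      have "z (Suc k) mod int p ^ k = z k" using assms(2) unfolding Zp_carrier by simp
      then have "(int n' * z (Suc k)) mod int p ^ k = (int n' * z k) mod int p ^ k"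
        by (metis mod_mult_right_eq)
      then show "(int n' * z k) mod (int p ^ k) = 0" using d1 by (simp add: mod_eq_0_iff_dvd[symmetric])
    qed
    then show ?thesis using less.IH[OF \<open>n' < n\<close> \<open>n' > 0\<close>] by blast
  next
    case False
    have pr: "Factorial_Ring.prime (int p)" using assms(1) by simp
    have "\<not> int p dvd int n" using False by simp
    then have "coprime (int p) (int n)" using pr by (simp add: prime_imp_coprime)
    then have "coprime (int p ^ k) (int n)" by simp
    moreover have "int p ^ k dvd int n * z k" using less.prems(2) by (simp add: mod_eq_0_iff_dvd)
    ultimately have "int p ^ k dvd z k" by (simp add: coprime_dvd_mult_right_iff)
    moreover have "0 \<le> z k \<and> z k < int p ^ k" using assms(2) unfolding Zp_carrier by blast
    ultimately show ?thesis by (metis zdvd_not_zless le_less)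
  qed
qed

lemma Zp_torsion:
  assumes "Factorial_Ring.prime p" "z \<in> carrier (Zp p)" "(n::nat) > 0" "[n] \<cdot>\<^bsub>Zp p\<^esub> z = \<zero>\<^bsub>Zp p\<^esub>"
  shows "z = \<zero>\<^bsub>Zp p\<^esub>"
proof -
  have "\<forall>k. (int n * z k) mod (int p ^ k) = 0" using assms(4) unfolding Zp_add_pow Zp_zero by meson
  then show ?thesis unfolding Zp_zero using Zp_torsion_aux[OF assms(1,2) assms(3)] by blast
qed

lemma Zp_p_ne_one:
  assumes "Factorial_Ring.prime p" shows "[p] \<cdot>\<^bsub>Zp p\<^esub> y \<noteq> \<one>\<^bsub>Zp p\<^esub>"
proof
  assume "[p] \<cdot>\<^bsub>Zp p\<^esub> y = \<one>\<^bsub>Zp p\<^esub>"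
  then have "(int p * y 1) mod (int p ^ 1) = 1 mod (int p ^ 1)" unfolding Zp_add_pow Zp_one by meson
  moreover have "p > 1" using assms prime_gt_1_nat by blast
  ultimately show False by simp
qed

lemma Zp_zero_ne_one:
  assumes "Factorial_Ring.prime p" shows "\<zero>\<^bsub>Zp p\<^esub> \<noteq> \<one>\<^bsub>Zp p\<^esub>"
proof
  assume "\<zero>\<^bsub>Zp p\<^esub> = \<one>\<^bsub>Zp p\<^esub>"
  then have "(0::int) = 1 mod (int p ^ 1)" unfolding Zp_zero Zp_one by meson
  moreover have "p > 1" using assms prime_gt_1_nat by blast
  ultimately show False by simp
qed


lemma ring_hom_add_pow:
  assumes "ring A" "ring B" "h \<in> ring_hom A B" "x \<in> carrier A"
  shows "h (add_pow A (n::nat) x) = add_pow B n (h x)"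
proof (induction n)
  case 0
  then show ?case using ring_hom_zero[OF assms(3,1,2)] by (simp add: add_pow_def)
next
  case (Suc n)
  interpret A: ring A by fact
  interpret B: ring B by fact
  have c: "add_pow A n x \<in> carrier A" using assms(4) by simp
  have "add_pow A (Suc n) x = add_pow A n x \<oplus>\<^bsub>A\<^esub> x" by (simp add: add_pow_def)
  then have "h (add_pow A (Suc n) x) = h (add_pow A n x) \<oplus>\<^bsub>B\<^esub> h x"
    using ring_hom_add[OF assms(3) c assms(4)] by simp
  also have "\<dots> = add_pow B (Suc n) (h x)" using Suc by (simp add: add_pow_def)
  finally show ?case .
qed

locale zp_quot = ring +
  fixes I and \<phi> and p
  assumes I: "ideal I R" and iso: "\<phi> \<in> ring_iso (R Quot I) (Zp p)" and pr: "Factorial_Ring.prime p"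
begin

lemma Q_ring: "ring (R Quot I)" using ideal.quotient_is_ring[OF I] .
lemma Zring: "ring (Zp p)" using Zp_ring[OF Q_ring iso] .
lemma kap_hom: "(+>) I \<in> ring_hom R (R Quot I)" using ideal.rcos_ring_hom[OF I] .
lemma phi_hom: "\<phi> \<in> ring_hom (R Quot I) (Zp p)" using iso by (simp add: ring_iso_def)
lemma psi_hom: "\<phi> \<circ> (+>) I \<in> ring_hom R (Zp p)" using ring_hom_trans[OF kap_hom phi_hom] .
lemma phi_inj: "inj_on \<phi> (carrier (R Quot I))" using iso by (simp add: ring_iso_def bij_betw_def)

lemma psi_zero: "y \<in> I \<Longrightarrow> \<phi> (I +> y) = \<zero>\<^bsub>Zp p\<^esub>"
proof -
  assume "y \<in> I"
  then have "I +> y = I" using a_rcos_zero[OF I] by blast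
  also have "I = \<zero>\<^bsub>R Quot I\<^esub>" by (simp add: FactRing_def)
  finally show ?thesis using ring_hom_zero[OF phi_hom Q_ring Zring] by simp
qed

lemma torsion:
  assumes "x \<in> carrier R" "n > (0::nat)" "add_pow R n x \<in> I"
  shows "x \<in> I"
proof -
  let ?psi = "\<phi> \<circ> (+>) I"
  have "?psi (add_pow R n x) = add_pow (Zp p) n (?psi x)"
    using ring_hom_add_pow[OF ring_axioms Zring psi_hom assms(1)] .
  moreover have "?psi (add_pow R n x) = \<zero>\<^bsub>Zp p\<^esub>" using psi_zero[OF assms(3)] by simp
  moreover have "?psi x \<in> carrier (Zp p)" using ring_hom_closed[OF psi_hom assms(1)] .
  ultimately have "?psi x = \<zero>\<^bsub>Zp p\<^esub>" using Zp_torsion[OF pr _ assms(2)] by metis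
  moreover have "\<phi> I = \<zero>\<^bsub>Zp p\<^esub>" using psi_zero[of "\<zero>"] a_rcos_zero[OF I] additive_subgroup.zero_closed[OF ideal.axioms(1)[OF I]] by simp
  ultimately have "\<phi> (I +> x) = \<phi> I" by simp
  moreover have "I +> x \<in> carrier (R Quot I)" using ring_hom_closed[OF kap_hom assms(1)] .
  moreover have "I \<in> carrier (R Quot I)" using ring.ring_simprules(2)[OF Q_ring] by (simp add: FactRing_def)
  ultimately have "I +> x = I" using phi_inj by (meson inj_onD)
  then show ?thesis using ideal.rcos_const_imp_mem[OF I assms(1)] by blast
qed

lemma one_notin: "\<one> \<notin> I"
proof
  assume "\<one> \<in> I"
  then have "\<phi> (I +> \<one>) = \<zero>\<^bsub>Zp p\<^esub>" using psi_zero by blast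
  moreover have "\<phi> (I +> \<one>) = \<one>\<^bsub>Zp p\<^esub>" using ring_hom_one[OF phi_hom] by (simp add: FactRing_def)
  ultimately show False using Zp_zero_ne_one[OF pr] by simp
qed

lemma p_nonunit: "add_pow R p \<one> \<notin> Units R"
proof
  assume "add_pow R p \<one> \<in> Units R"
  then obtain u where u: "u \<in> carrier R" "u \<otimes> (add_pow R p \<one>) = \<one>" by (auto simp: Units_def)
  have "u \<otimes> (add_pow R p \<one>) = add_pow R p u" using u(1) add_pow_rdistr[of u \<one> p] by simp
  then have "add_pow R p u = \<one>" using u by simp
  then have "(\<phi> \<circ> (+>) I) (add_pow R p u) = \<one>\<^bsub>Zp p\<^esub>" using ring_hom_one[OF psi_hom] by simp
  moreover have "(\<phi> \<circ> (+>) I) (add_pow R p u) = add_pow (Zp p) p ((\<phi> \<circ> (+>) I) u)"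
    using ring_hom_add_pow[OF ring_axioms Zring psi_hom u(1), of p] .
  ultimately show False using Zp_p_ne_one[OF pr] by metis
qed

end

lemma (in ring) finite_torsion:
  assumes "ideal I R" "finite I" "y \<in> I"
  shows "\<exists>n::nat. n > 0 \<and> add_pow R n y = \<zero>"
proof -
  have yc: "y \<in> carrier R" by (rule ideal.Icarr[OF assms(1,3)])
  have cl: "add_pow R k y \<in> I" for k::nat
  proof (induction k)
    case 0 then show ?case using additive_subgroup.zero_closed[OF ideal.axioms(1)[OF assms(1)]] by simp
  next
    case (Suc k)
    have "add_pow R (Suc k) y = add_pow R k y \<oplus> y" by (simp add: add.nat_pow_Suc)
    then show ?case using Suc assms(3) additive_subgroup.a_closed[OF ideal.axioms(1)[OF assms(1)]] by simp
  qed
  define g where "g = (\<lambda>k::nat. add_pow R k y)"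
  have "g ` {0..card I} \<subseteq> I" using cl by (auto simp: g_def)
  then have "card (g ` {0..card I}) \<le> card I" using assms(2) card_mono by blast
  then have "card (g ` {0..card I}) < card {0..card I}" by simp
  then have "\<not> inj_on g {0..card I}" by (rule pigeonhole)
  then obtain a b where ab: "a \<noteq> b" "g a = g b" unfolding inj_on_def by blast
  have "\<exists>a b. a < b \<and> g a = g b"
  proof (cases "a < b")
    case True then show ?thesis using ab by blast
  next
    case False then have "b < a" using ab(1) by simp
    then show ?thesis using ab(2) by (intro exI[of _ b] exI[of _ a]) simp
  qed
  then obtain a b where ab2: "a < b" "g a = g b" by blast
  have "add_pow R a y \<oplus> add_pow R (b - a) y = add_pow R (a + (b - a)) y" using add.nat_pow_mult[OF yc] .
  also have "\<dots> = add_pow R a y" using ab2 by (simp add: g_def)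
  also have "\<dots> = add_pow R a y \<oplus> \<zero>" using add.nat_pow_closed[OF yc] by simp
  finally have "add_pow R (b - a) y = \<zero>" using add.l_cancel[of "add_pow R a y"] add.nat_pow_closed[OF yc] by blast
  then show ?thesis using ab2(1) by (intro exI[of _ "b - a"]) simp
qed


context ring begin
lemma idl_add: "ideal I R \<Longrightarrow> x \<in> I \<Longrightarrow> y \<in> I \<Longrightarrow> x \<oplus> y \<in> I"
  by (rule additive_subgroup.a_closed[OF ideal.axioms(1)])
lemma idl_neg: "ideal I R \<Longrightarrow> x \<in> I \<Longrightarrow> \<ominus> x \<in> I"
  by (rule additive_subgroup.a_inv_closed[OF ideal.axioms(1)])
lemma idl_zero: "ideal I R \<Longrightarrow> \<zero> \<in> I"
  by (rule additive_subgroup.zero_closed[OF ideal.axioms(1)])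
lemma idl_lmul: "ideal I R \<Longrightarrow> x \<in> carrier R \<Longrightarrow> a \<in> I \<Longrightarrow> x \<otimes> a \<in> I"
  by (rule ideal.I_l_closed)
lemma idl_rmul: "ideal I R \<Longrightarrow> x \<in> carrier R \<Longrightarrow> a \<in> I \<Longrightarrow> a \<otimes> x \<in> I"
  by (rule ideal.I_r_closed)
lemma idl_car: "ideal I R \<Longrightarrow> a \<in> I \<Longrightarrow> a \<in> carrier R"
  by (rule ideal.Icarr)
end

context cring begin

lemma congr_sub_iff:
  assumes I: "ideal I R"
  shows "(a,b,c,d) \<in> congr_sub R I \<longleftrightarrow> a \<in> carrier R \<and> d \<in> carrier R \<and> a \<ominus> \<one> \<in> I \<and> b \<in> I \<and> c \<in> I \<and> d \<ominus> \<one> \<in> I"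
proof
  assume "(a,b,c,d) \<in> congr_sub R I"
  then obtain a' d' where h: "a = \<one> \<oplus> a'" "d = \<one> \<oplus> d'" "a' \<in> I" "b \<in> I" "c \<in> I" "d' \<in> I"
    by (auto simp: congr_sub_def)
  have c: "a' \<in> carrier R" "d' \<in> carrier R" using h idl_car[OF I] by auto
  have "a \<ominus> \<one> = a'" "d \<ominus> \<one> = d'" unfolding h using c by algebra+
  then show "a \<in> carrier R \<and> d \<in> carrier R \<and> a \<ominus> \<one> \<in> I \<and> b \<in> I \<and> c \<in> I \<and> d \<ominus> \<one> \<in> I"
    using h c by simp
next
  assume h: "a \<in> carrier R \<and> d \<in> carrier R \<and> a \<ominus> \<one> \<in> I \<and> b \<in> I \<and> c \<in> I \<and> d \<ominus> \<one> \<in> I"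
  have "a = \<one> \<oplus> (a \<ominus> \<one>)" "d = \<one> \<oplus> (d \<ominus> \<one>)" using h by algebra+
  then show "(a,b,c,d) \<in> congr_sub R I" using h unfolding congr_sub_def by blast
qed

lemma GL2_inv:
  assumes "(a,b,c,d) \<in> carrier (GL2 R)"
  shows "inv\<^bsub>GL2 R\<^esub> (a,b,c,d) = (inv (a \<otimes> d \<ominus> b \<otimes> c) \<otimes> d, \<ominus> (inv (a \<otimes> d \<ominus> b \<otimes> c) \<otimes> b),
     \<ominus> (inv (a \<otimes> d \<ominus> b \<otimes> c) \<otimes> c), inv (a \<otimes> d \<ominus> b \<otimes> c) \<otimes> a)"
proof -
  have c: "a \<in> carrier R" "b \<in> carrier R" "c \<in> carrier R" "d \<in> carrier R"
    and u: "a \<otimes> d \<ominus> b \<otimes> c \<in> Units R" using assms by (auto simp: GL2_mem)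
  define v where "v = inv (a \<otimes> d \<ominus> b \<otimes> c)"
  have v: "v \<in> carrier R" "v \<otimes> (a \<otimes> d \<ominus> b \<otimes> c) = \<one>" using u by (auto simp: v_def)
  have vu: "v \<in> Units R" using u by (simp add: v_def)
  let ?y = "(v \<otimes> d, \<ominus> (v \<otimes> b), \<ominus> (v \<otimes> c), v \<otimes> a)"
  have e1: "v \<otimes> d \<otimes> a \<oplus> \<ominus> (v \<otimes> b) \<otimes> c = v \<otimes> (a \<otimes> d \<ominus> b \<otimes> c)" using c v(1) by algebra
  have e2: "v \<otimes> d \<otimes> b \<oplus> \<ominus> (v \<otimes> b) \<otimes> d = \<zero>" using c v(1) by algebra
  have e3: "\<ominus> (v \<otimes> c) \<otimes> a \<oplus> v \<otimes> a \<otimes> c = \<zero>" using c v(1) by algebra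
  have e4: "\<ominus> (v \<otimes> c) \<otimes> b \<oplus> v \<otimes> a \<otimes> d = v \<otimes> (a \<otimes> d \<ominus> b \<otimes> c)" using c v(1) by algebra
  have e5: "v \<otimes> d \<otimes> (v \<otimes> a) \<ominus> \<ominus> (v \<otimes> b) \<otimes> \<ominus> (v \<otimes> c) = v \<otimes> (v \<otimes> (a \<otimes> d \<ominus> b \<otimes> c))" using c v(1) by algebra
  have det_y: "v \<otimes> d \<otimes> (v \<otimes> a) \<ominus> \<ominus> (v \<otimes> b) \<otimes> \<ominus> (v \<otimes> c) = v"
  proof -
    have "v \<otimes> (v \<otimes> (a \<otimes> d \<ominus> b \<otimes> c)) = v" using v by (simp only: v(2) r_one)
    then show ?thesis by (rule trans[OF e5])
  qed
  have yc: "?y \<in> carrier (GL2 R)" unfolding GL2_mem det_y using c v vu by auto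
  have "?y \<otimes>\<^bsub>GL2 R\<^esub> (a,b,c,d) = \<one>\<^bsub>GL2 R\<^esub>" unfolding GL2_mult GL2_one m2mult.simps
    by (simp only: e1 e2 e3 e4 v(2))
  then have "inv\<^bsub>GL2 R\<^esub> (a,b,c,d) = ?y" using group.inv_equality[OF GL2_group _ assms yc] by blast
  then show ?thesis by (simp add: v_def)
qed

lemma congr_sub_GL2:
  assumes "local_ring R" "ideal I R" "\<one> \<notin> I"
  shows "congr_sub R I \<subseteq> carrier (GL2 R)"
proof
  fix x assume x: "x \<in> congr_sub R I"
  obtain m where m: "maximalideal m R" using assms(1) by (auto simp: local_ring_def)
  have Im: "I \<subseteq> m" using local_proper_sub[OF assms(1) m assms(2,3)] .
  obtain a b c d where xe: "x = (a,b,c,d)" by (cases x)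
  then have h: "a \<in> carrier R" "d \<in> carrier R" "a \<ominus> \<one> \<in> I" "b \<in> I" "c \<in> I" "d \<ominus> \<one> \<in> I"
    using x congr_sub_iff[OF assms(2)] by auto
  have bc: "b \<in> carrier R" "c \<in> carrier R" using h idl_car[OF assms(2)] by auto
  have "a \<otimes> d \<ominus> b \<otimes> c = \<one> \<oplus> ((a \<ominus> \<one>) \<otimes> d \<oplus> (d \<ominus> \<one>) \<oplus> \<ominus> (b \<otimes> c))" using h bc by algebra
  moreover have "(a \<ominus> \<one>) \<otimes> d \<oplus> (d \<ominus> \<one>) \<oplus> \<ominus> (b \<otimes> c) \<in> I"
    by (rule idl_add[OF assms(2) idl_add[OF assms(2) idl_rmul[OF assms(2) h(2) h(3)] h(6)] idl_neg[OF assms(2) idl_rmul[OF assms(2) bc(2) h(4)]]])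
  ultimately have "a \<otimes> d \<ominus> b \<otimes> c \<in> Units R" using local_unit_plus[OF assms(1) m] Im by auto
  then show "x \<in> carrier (GL2 R)" unfolding xe GL2_mem using h bc by auto
qed

lemma congr_sub_subgroup:
  assumes "local_ring R" "ideal I R" "\<one> \<notin> I"
  shows "subgroup (congr_sub R I) (GL2 R)"
proof (rule group.subgroupI[OF GL2_group])
  note I = assms(2)
  show "congr_sub R I \<subseteq> carrier (GL2 R)" using congr_sub_GL2[OF assms] .
  have oo: "\<one> \<ominus> \<one> = \<zero>" by algebra
  have "(\<one>, \<zero>, \<zero>, \<one>) \<in> congr_sub R I" unfolding congr_sub_iff[OF I] oo using idl_zero[OF I] by simp
  then show "congr_sub R I \<noteq> {}" by blast
next
  note I = assms(2)
  fix x assume x: "x \<in> congr_sub R I"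
  obtain a b c d where xe: "x = (a,b,c,d)" by (cases x)
  then have h: "a \<in> carrier R" "d \<in> carrier R" "a \<ominus> \<one> \<in> I" "b \<in> I" "c \<in> I" "d \<ominus> \<one> \<in> I"
    using x congr_sub_iff[OF I] by auto
  have bc: "b \<in> carrier R" "c \<in> carrier R" using h idl_car[OF I] by auto
  have xc: "(a,b,c,d) \<in> carrier (GL2 R)" using congr_sub_GL2[OF assms] x xe by auto
  then have u: "a \<otimes> d \<ominus> b \<otimes> c \<in> Units R" by (simp add: GL2_mem)
  define v where "v = inv (a \<otimes> d \<ominus> b \<otimes> c)"
  have v: "v \<in> carrier R" "v \<otimes> (a \<otimes> d \<ominus> b \<otimes> c) = \<one>" using u by (auto simp: v_def)
  have i1: "v \<otimes> d \<ominus> v \<otimes> (a \<otimes> d \<ominus> b \<otimes> c) = v \<otimes> (\<ominus> ((a \<ominus> \<one>) \<otimes> d) \<oplus> b \<otimes> c)"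
    using h bc v(1) by algebra
  have i2: "v \<otimes> a \<ominus> v \<otimes> (a \<otimes> d \<ominus> b \<otimes> c) = v \<otimes> (\<ominus> ((d \<ominus> \<one>) \<otimes> a) \<oplus> b \<otimes> c)"
    using h bc v(1) by algebra
  have "v \<otimes> (\<ominus> ((a \<ominus> \<one>) \<otimes> d) \<oplus> b \<otimes> c) \<in> I"
    by (rule idl_lmul[OF I v(1) idl_add[OF I idl_neg[OF I idl_rmul[OF I h(2) h(3)]] idl_rmul[OF I bc(2) h(4)]]])
  then have j1: "v \<otimes> d \<ominus> \<one> \<in> I" using i1 v(2) by simp
  have "v \<otimes> (\<ominus> ((d \<ominus> \<one>) \<otimes> a) \<oplus> b \<otimes> c) \<in> I"
    by (rule idl_lmul[OF I v(1) idl_add[OF I idl_neg[OF I idl_rmul[OF I h(1) h(6)]] idl_rmul[OF I bc(2) h(4)]]])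
  then have j2: "v \<otimes> a \<ominus> \<one> \<in> I" using i2 v(2) by simp
  have j3: "\<ominus> (v \<otimes> b) \<in> I" "\<ominus> (v \<otimes> c) \<in> I"
    by (rule idl_neg[OF I idl_lmul[OF I v(1) h(4)]], rule idl_neg[OF I idl_lmul[OF I v(1) h(5)]])
  show "inv\<^bsub>GL2 R\<^esub> x \<in> congr_sub R I"
    unfolding xe GL2_inv[OF xc] v_def[symmetric] congr_sub_iff[OF I] using j1 j2 j3 h v(1) by auto
next
  note I = assms(2)
  fix x y assume x: "x \<in> congr_sub R I" and y: "y \<in> congr_sub R I"
  obtain a b c d where xe: "x = (a,b,c,d)" by (cases x)
  obtain e f g k where ye: "y = (e,f,g,k)" by (cases y)
  have h: "a \<in> carrier R" "d \<in> carrier R" "a \<ominus> \<one> \<in> I" "b \<in> I" "c \<in> I" "d \<ominus> \<one> \<in> I"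
    using x xe congr_sub_iff[OF I] by auto
  have h2: "e \<in> carrier R" "k \<in> carrier R" "e \<ominus> \<one> \<in> I" "f \<in> I" "g \<in> I" "k \<ominus> \<one> \<in> I"
    using y ye congr_sub_iff[OF I] by auto
  have bc: "b \<in> carrier R" "c \<in> carrier R" "f \<in> carrier R" "g \<in> carrier R" using h h2 idl_car[OF I] by auto
  have q1: "a \<otimes> e \<oplus> b \<otimes> g \<ominus> \<one> = (a \<ominus> \<one>) \<otimes> e \<oplus> (e \<ominus> \<one>) \<oplus> b \<otimes> g" using h h2 bc by algebra
  have q4: "c \<otimes> f \<oplus> d \<otimes> k \<ominus> \<one> = c \<otimes> f \<oplus> (d \<ominus> \<one>) \<otimes> k \<oplus> (k \<ominus> \<one>)" using h h2 bc by algebra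
  have "(a \<ominus> \<one>) \<otimes> e \<oplus> (e \<ominus> \<one>) \<oplus> b \<otimes> g \<in> I"
    by (rule idl_add[OF I idl_add[OF I idl_rmul[OF I h2(1) h(3)] h2(3)] idl_rmul[OF I bc(4) h(4)]])
  moreover have "c \<otimes> f \<oplus> (d \<ominus> \<one>) \<otimes> k \<oplus> (k \<ominus> \<one>) \<in> I"
    by (rule idl_add[OF I idl_add[OF I idl_rmul[OF I bc(3) h(5)] idl_rmul[OF I h2(2) h(6)]] h2(6)])
  moreover have "a \<otimes> f \<oplus> b \<otimes> k \<in> I"
    by (rule idl_add[OF I idl_lmul[OF I h(1) h2(4)] idl_rmul[OF I h2(2) h(4)]])
  moreover have "c \<otimes> e \<oplus> d \<otimes> g \<in> I"
    by (rule idl_add[OF I idl_rmul[OF I h2(1) h(5)] idl_lmul[OF I h(2) h2(5)]])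
  ultimately show "x \<otimes>\<^bsub>GL2 R\<^esub> y \<in> congr_sub R I"
    unfolding xe ye GL2_mult m2mult.simps congr_sub_iff[OF I] using q1 q4 h h2 bc by auto
qed

end


fun ent :: "nat \<Rightarrow> 'a mat2 \<Rightarrow> 'a" where
  "ent i (a,b,c,d) = (if i = 0 then a else if i = 1 then b else if i = 2 then c else d)"

context cring begin

lemma cong_kappa:
  assumes M: "ideal M R" and c: "Xx \<in> carrier R" "Ww \<in> carrier R" and d: "Xx \<ominus> Ww \<in> M"
  shows "M +> Xx = M +> Ww"
proof -
  have dc: "Xx \<ominus> Ww \<in> carrier R" using c by simp
  have "Xx = Ww \<oplus> (Xx \<ominus> Ww)" using c by algebra
  then have "M +> Xx = (M +> Ww) \<oplus>\<^bsub>R Quot M\<^esub> (M +> (Xx \<ominus> Ww))"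
    using ring_hom_add[OF ideal.rcos_ring_hom[OF M] c(2) dc] by simp
  also have "M +> (Xx \<ominus> Ww) = \<zero>\<^bsub>R Quot M\<^esub>" using a_rcos_zero[OF M d] by (simp add: FactRing_def)
  also have "(M +> Ww) \<oplus>\<^bsub>R Quot M\<^esub> \<zero>\<^bsub>R Quot M\<^esub> = M +> Ww"
    using ring.ring_simprules(15)[OF ideal.quotient_is_ring[OF M]] ring_hom_closed[OF ideal.rcos_ring_hom[OF M] c(2)] by simp
  finally show ?thesis .
qed

lemma piece:
  assumes I: "ideal I R" and J: "ideal J R" and M: "ideal M R"
    and JI: "\<forall>x\<in>J. \<forall>y\<in>I. x \<otimes> y \<in> M"
    and c: "a \<in> carrier R" "b \<in> carrier R" "c \<in> carrier R" "d \<in> carrier R" "\<beta> \<in> carrier R" "\<gamma> \<in> carrier R"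
    and h: "a \<ominus> c \<in> J" "b \<ominus> d \<in> J" "b \<ominus> \<beta> \<in> I" "c \<ominus> \<gamma> \<in> I"
  shows "a \<otimes> b \<ominus> c \<otimes> d \<ominus> ((a \<ominus> c) \<otimes> \<beta> \<oplus> \<gamma> \<otimes> (b \<ominus> d)) \<in> M"
proof -
  have "a \<otimes> b \<ominus> c \<otimes> d \<ominus> ((a \<ominus> c) \<otimes> \<beta> \<oplus> \<gamma> \<otimes> (b \<ominus> d)) = (a \<ominus> c) \<otimes> (b \<ominus> \<beta>) \<oplus> (b \<ominus> d) \<otimes> (c \<ominus> \<gamma>)"
    using c by algebra
  moreover have "(a \<ominus> c) \<otimes> (b \<ominus> \<beta>) \<in> M" using JI h(1) h(3) by blast
  moreover have "(b \<ominus> d) \<otimes> (c \<ominus> \<gamma>) \<in> M" using JI h(2) h(4) by blast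
  ultimately show ?thesis using idl_add[OF M] by metis
qed

lemma lin6: "A1 \<in> carrier R \<Longrightarrow> A2 \<in> carrier R \<Longrightarrow> C1 \<in> carrier R \<Longrightarrow> C2 \<in> carrier R \<Longrightarrow> E1 \<in> carrier R \<Longrightarrow> E2 \<in> carrier R \<Longrightarrow>
  (A1 \<oplus> A2) \<ominus> (C1 \<oplus> C2) \<ominus> (E1 \<oplus> E2) = (A1 \<ominus> C1 \<ominus> E1) \<oplus> (A2 \<ominus> C2 \<ominus> E2)"
  by algebra

lemma entry:
  assumes I: "ideal I R" and J: "ideal J R" and M: "ideal M R"
    and JI: "\<forall>x\<in>J. \<forall>y\<in>I. x \<otimes> y \<in> M"
    and c: "a1 \<in> carrier R" "b1 \<in> carrier R" "c1 \<in> carrier R" "d1 \<in> carrier R" "\<beta>1 \<in> carrier R" "\<gamma>1 \<in> carrier R"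
    and h: "a1 \<ominus> c1 \<in> J" "b1 \<ominus> d1 \<in> J" "b1 \<ominus> \<beta>1 \<in> I" "c1 \<ominus> \<gamma>1 \<in> I"
    and c2: "a2 \<in> carrier R" "b2 \<in> carrier R" "c2 \<in> carrier R" "d2 \<in> carrier R" "\<beta>2 \<in> carrier R" "\<gamma>2 \<in> carrier R"
    and h2: "a2 \<ominus> c2 \<in> J" "b2 \<ominus> d2 \<in> J" "b2 \<ominus> \<beta>2 \<in> I" "c2 \<ominus> \<gamma>2 \<in> I"
  shows "(a1 \<otimes> b1 \<oplus> a2 \<otimes> b2) \<ominus> (c1 \<otimes> d1 \<oplus> c2 \<otimes> d2) \<ominus>
     (((a1 \<ominus> c1) \<otimes> \<beta>1 \<oplus> \<gamma>1 \<otimes> (b1 \<ominus> d1)) \<oplus> ((a2 \<ominus> c2) \<otimes> \<beta>2 \<oplus> \<gamma>2 \<otimes> (b2 \<ominus> d2))) \<in> M"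
proof -
  have "(a1 \<otimes> b1 \<oplus> a2 \<otimes> b2) \<ominus> (c1 \<otimes> d1 \<oplus> c2 \<otimes> d2) \<ominus>
     (((a1 \<ominus> c1) \<otimes> \<beta>1 \<oplus> \<gamma>1 \<otimes> (b1 \<ominus> d1)) \<oplus> ((a2 \<ominus> c2) \<otimes> \<beta>2 \<oplus> \<gamma>2 \<otimes> (b2 \<ominus> d2)))
    = (a1 \<otimes> b1 \<ominus> c1 \<otimes> d1 \<ominus> ((a1 \<ominus> c1) \<otimes> \<beta>1 \<oplus> \<gamma>1 \<otimes> (b1 \<ominus> d1))) \<oplus>
      (a2 \<otimes> b2 \<ominus> c2 \<otimes> d2 \<ominus> ((a2 \<ominus> c2) \<otimes> \<beta>2 \<oplus> \<gamma>2 \<otimes> (b2 \<ominus> d2)))"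
    using c c2 by (intro lin6) auto
  then show ?thesis using idl_add[OF M piece[OF I J M JI c h] piece[OF I J M JI c2 h2]] by metis
qed


lemma e1: "u \<in> carrier R \<Longrightarrow> v \<in> carrier R \<Longrightarrow> w \<in> carrier R \<Longrightarrow> z \<in> carrier R \<Longrightarrow> (u \<otimes> \<one> \<oplus> \<one> \<otimes> v) \<oplus> (w \<otimes> \<zero> \<oplus> \<zero> \<otimes> z) = u \<oplus> v" by algebra
lemma e2: "u \<in> carrier R \<Longrightarrow> v \<in> carrier R \<Longrightarrow> w \<in> carrier R \<Longrightarrow> z \<in> carrier R \<Longrightarrow> (u \<otimes> \<zero> \<oplus> \<one> \<otimes> v) \<oplus> (w \<otimes> \<one> \<oplus> \<zero> \<otimes> z) = w \<oplus> v" by algebra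
lemma e3: "u \<in> carrier R \<Longrightarrow> v \<in> carrier R \<Longrightarrow> w \<in> carrier R \<Longrightarrow> z \<in> carrier R \<Longrightarrow> (u \<otimes> \<one> \<oplus> \<zero> \<otimes> v) \<oplus> (w \<otimes> \<zero> \<oplus> \<one> \<otimes> z) = u \<oplus> z" by algebra
lemma e4: "u \<in> carrier R \<Longrightarrow> v \<in> carrier R \<Longrightarrow> w \<in> carrier R \<Longrightarrow> z \<in> carrier R \<Longrightarrow> (u \<otimes> \<zero> \<oplus> \<zero> \<otimes> v) \<oplus> (w \<otimes> \<one> \<oplus> \<one> \<otimes> z) = w \<oplus> z" by algebra
lemma mz: "a \<in> carrier R \<Longrightarrow> a \<ominus> \<zero> = a" by algebra

lemma mat_key:
  assumes I: "ideal I R" and J: "ideal J R" and M: "ideal M R"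
    and JI: "\<forall>x\<in>J. \<forall>y\<in>I. x \<otimes> y \<in> M"
    and cx: "x1 \<in> carrier R" "x2 \<in> carrier R" "x3 \<in> carrier R" "x4 \<in> carrier R"
    and cy: "y1 \<in> carrier R" "y2 \<in> carrier R" "y3 \<in> carrier R" "y4 \<in> carrier R"
    and cq: "q1 \<in> carrier R" "q2 \<in> carrier R" "q3 \<in> carrier R" "q4 \<in> carrier R"
    and cr: "r1 \<in> carrier R" "r2 \<in> carrier R" "r3 \<in> carrier R" "r4 \<in> carrier R"
    and Iy: "y1 \<ominus> \<one> \<in> I" "y2 \<in> I" "y3 \<in> I" "y4 \<ominus> \<one> \<in> I"
    and Iq: "q1 \<ominus> \<one> \<in> I" "q2 \<in> I" "q3 \<in> I" "q4 \<ominus> \<one> \<in> I"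
    and Jx: "x1 \<ominus> q1 \<in> J" "x2 \<ominus> q2 \<in> J" "x3 \<ominus> q3 \<in> J" "x4 \<ominus> q4 \<in> J"
    and Jy: "y1 \<ominus> r1 \<in> J" "y2 \<ominus> r2 \<in> J" "y3 \<ominus> r3 \<in> J" "y4 \<ominus> r4 \<in> J"
  shows "ent i (m2mult R (x1,x2,x3,x4) (y1,y2,y3,y4)) \<ominus> ent i (m2mult R (q1,q2,q3,q4) (r1,r2,r3,r4))
     \<ominus> ((ent i (x1,x2,x3,x4) \<ominus> ent i (q1,q2,q3,q4)) \<oplus> (ent i (y1,y2,y3,y4) \<ominus> ent i (r1,r2,r3,r4))) \<in> M"
proof -
  have Iy': "y2 \<ominus> \<zero> \<in> I" "y3 \<ominus> \<zero> \<in> I" using Iy cy by (simp_all add: mz)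
  have Iq': "q2 \<ominus> \<zero> \<in> I" "q3 \<ominus> \<zero> \<in> I" using Iq cq by (simp_all add: mz)
  note E = entry[OF I J M JI]
  have k1: "(x1 \<otimes> y1 \<oplus> x2 \<otimes> y3) \<ominus> (q1 \<otimes> r1 \<oplus> q2 \<otimes> r3) \<ominus> ((x1 \<ominus> q1) \<oplus> (y1 \<ominus> r1)) \<in> M"
    using E[OF cx(1) cy(1) cq(1) cr(1) one_closed one_closed Jx(1) Jy(1) Iy(1) Iq(1)
               cx(2) cy(3) cq(2) cr(3) zero_closed zero_closed Jx(2) Jy(3) Iy'(2) Iq'(1)]
    by (simp only: e1 cx cy cq cr minus_closed)
  have k2: "(x1 \<otimes> y2 \<oplus> x2 \<otimes> y4) \<ominus> (q1 \<otimes> r2 \<oplus> q2 \<otimes> r4) \<ominus> ((x2 \<ominus> q2) \<oplus> (y2 \<ominus> r2)) \<in> M"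
    using E[OF cx(1) cy(2) cq(1) cr(2) zero_closed one_closed Jx(1) Jy(2) Iy'(1) Iq(1)
               cx(2) cy(4) cq(2) cr(4) one_closed zero_closed Jx(2) Jy(4) Iy(4) Iq'(1)]
    by (simp only: e2 cx cy cq cr minus_closed)
  have k3: "(x3 \<otimes> y1 \<oplus> x4 \<otimes> y3) \<ominus> (q3 \<otimes> r1 \<oplus> q4 \<otimes> r3) \<ominus> ((x3 \<ominus> q3) \<oplus> (y3 \<ominus> r3)) \<in> M"
    using E[OF cx(3) cy(1) cq(3) cr(1) one_closed zero_closed Jx(3) Jy(1) Iy(1) Iq'(2)
               cx(4) cy(3) cq(4) cr(3) zero_closed one_closed Jx(4) Jy(3) Iy'(2) Iq(4)]
    by (simp only: e3 cx cy cq cr minus_closed)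
  have k4: "(x3 \<otimes> y2 \<oplus> x4 \<otimes> y4) \<ominus> (q3 \<otimes> r2 \<oplus> q4 \<otimes> r4) \<ominus> ((x4 \<ominus> q4) \<oplus> (y4 \<ominus> r4)) \<in> M"
    using E[OF cx(3) cy(2) cq(3) cr(2) zero_closed zero_closed Jx(3) Jy(2) Iy'(1) Iq'(2)
               cx(4) cy(4) cq(4) cr(4) one_closed one_closed Jx(4) Jy(4) Iy(4) Iq(4)]
    by (simp only: e4 cx cy cq cr minus_closed)
  show ?thesis using k1 k2 k3 k4 by simp
qed

end


definition Gtdef :: "('b, 'd) ring_scheme \<Rightarrow> 'b set \<Rightarrow> ('b set \<Rightarrow> (nat \<Rightarrow> int)) \<Rightarrow> (nat \<Rightarrow> int) mat2 set \<Rightarrow> 'b mat2 set" where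
  "Gtdef R IR phiR Phi = {M \<in> carrier (GL2 R). m2map (\<lambda>x. phiR (IR +>\<^bsub>R\<^esub> x)) M \<in> Phi}"

locale mainctx = cring S for S :: "('a, 'e) ring_scheme" (structure) +
  fixes R :: "('b, 'd) ring_scheme" and IS IR p phiS phiR f Phi h
  assumes prime: "Factorial_Ring.prime p"
    and locS: "local_ring S" and locR: "local_ring R"
    and IS: "ideal IS S" and ISfin: "finite IS" and IR: "ideal IR R" and IRfin: "finite IR"
    and phiS: "phiS \<in> ring_iso (S Quot IS) (Zp p)" and phiR: "phiR \<in> ring_iso (R Quot IR) (Zp p)"
    and f: "f \<in> ring_hom S R" and fsurj: "f ` carrier S = carrier R"
    and Jfin: "finite (a_kernel S R f)" and Jnz: "a_kernel S R f \<noteq> {\<zero>}"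
    and Phi: "subgroup Phi (GL2 (Zp p))"
    and hyp: "congr_sub S (a_kernel S R f) \<subseteq> comm_pow_sub (GL2 S) (congr_sub S IS) p"
    and hhom: "h \<in> hom ((GL2 R)\<lparr>carrier := Gtdef R IR phiR Phi\<rparr>) (GL2 S)"
    and lift: "\<forall>M\<in>Gtdef R IR phiR Phi. m2map f (h M) = M"
begin

abbreviation "J \<equiv> a_kernel S R f"
abbreviation "GS \<equiv> congr_sub S IS"
abbreviation "Gt \<equiv> Gtdef R IR phiR Phi"

lemma Rc: "cring R" using locR local_cring by blast
lemma zpS: "zp_quot S IS phiS p" by (intro zp_quot.intro ring_axioms zp_quot_axioms.intro IS phiS prime)
lemma zpR: "zp_quot R IR phiR p" using cring.axioms(1)[OF Rc] by (intro zp_quot.intro zp_quot_axioms.intro IR phiR prime)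
lemma oneS: "\<one> \<notin> IS" using zp_quot.one_notin[OF zpS] .
lemma oneR: "\<one>\<^bsub>R\<^esub> \<notin> IR" using zp_quot.one_notin[OF zpR] .
lemma GS_sub: "subgroup GS (GL2 S)" using congr_sub_subgroup[OF locS IS oneS] .
lemma GR_car: "congr_sub R IR \<subseteq> carrier (GL2 R)" using cring.congr_sub_GL2[OF Rc locR IR oneR] .
lemma GLS: "group (GL2 S)" using GL2_group .
lemma fhom: "ring_hom_ring S R f" using ring_hom_ringI2[OF ring_axioms cring.axioms(1)[OF Rc] f] .
lemma Jideal: "ideal J S" using ring_hom_ring.kernel_is_ideal[OF fhom] .
lemma Jmem: "x \<in> J \<longleftrightarrow> x \<in> carrier S \<and> f x = \<zero>\<^bsub>R\<^esub>" by (simp add: a_kernel_def')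

lemma pow_in_GS: "x \<in> GS \<Longrightarrow> x [^]\<^bsub>GL2 S\<^esub> (n::nat) \<in> GS"
proof (induction n)
  case 0 then show ?case using subgroup.one_closed[OF GS_sub] by simp
next
  case (Suc n) then show ?case using subgroup.m_closed[OF GS_sub] by simp
qed

lemma gen_sub: "comm_pow_sub (GL2 S) GS p \<subseteq> GS"
  unfolding comm_pow_sub_def
proof (rule group.generate_subgroup_incl[OF GLS _ GS_sub])
  show "derived_set (GL2 S) GS \<union> {x [^]\<^bsub>GL2 S\<^esub> p |x. x \<in> GS} \<subseteq> GS"
  proof
    fix z assume "z \<in> derived_set (GL2 S) GS \<union> {x [^]\<^bsub>GL2 S\<^esub> p |x. x \<in> GS}"
    then show "z \<in> GS"
    proof
      assume "z \<in> derived_set (GL2 S) GS"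
      then obtain a b where ab: "a \<in> GS" "b \<in> GS"
        "z = a \<otimes>\<^bsub>GL2 S\<^esub> b \<otimes>\<^bsub>GL2 S\<^esub> inv\<^bsub>GL2 S\<^esub> a \<otimes>\<^bsub>GL2 S\<^esub> inv\<^bsub>GL2 S\<^esub> b" by blast
      then show ?thesis using subgroup.m_closed[OF GS_sub] subgroup.m_inv_closed[OF GS_sub] by simp
    next
      assume "z \<in> {x [^]\<^bsub>GL2 S\<^esub> p |x. x \<in> GS}"
      then show ?thesis using pow_in_GS by blast
    qed
  qed
qed

lemma J_sub_IS: "J \<subseteq> IS"
proof
  fix j assume j: "j \<in> J"
  have jc: "j \<in> carrier S" using j Jmem by blast
  have oo: "\<one> \<ominus> \<one> = \<zero>" by algebra
  have jj: "(\<one> \<oplus> j) \<ominus> \<one> = j" using jc by algebra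
  have "(\<one> \<oplus> j, \<zero>, \<zero>, \<one>) \<in> congr_sub S J"
    unfolding congr_sub_iff[OF Jideal] oo jj using j jc idl_zero[OF Jideal] by simp
  then have "(\<one> \<oplus> j, \<zero>, \<zero>, \<one>) \<in> GS" using hyp gen_sub by blast
  then have "(\<one> \<oplus> j) \<ominus> \<one> \<in> IS" unfolding congr_sub_iff[OF IS] by blast
  then show "j \<in> IS" using jj by simp
qed

lemma f_IS: "y \<in> IS \<Longrightarrow> f y \<in> IR"
proof -
  assume y: "y \<in> IS"
  have yc: "y \<in> carrier S" using idl_car[OF IS y] .
  obtain n::nat where n: "n > 0" "add_pow S n y = \<zero>" using finite_torsion[OF IS ISfin y] by blast
  have "f (add_pow S n y) = add_pow R n (f y)"
    using ring_hom_add_pow[OF ring_axioms cring.axioms(1)[OF Rc] f yc] .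
  moreover have "f \<zero> = \<zero>\<^bsub>R\<^esub>" using ring_hom_zero[OF f ring_axioms cring.axioms(1)[OF Rc]] .
  ultimately have "add_pow R n (f y) = \<zero>\<^bsub>R\<^esub>" using n by simp
  then have "add_pow R n (f y) \<in> IR" using ring.idl_zero[OF cring.axioms(1)[OF Rc] IR] by simp
  then show "f y \<in> IR" using zp_quot.torsion[OF zpR ring_hom_closed[OF f yc] n(1)] by blast
qed


lemma fminus: "x \<in> carrier S \<Longrightarrow> y \<in> carrier S \<Longrightarrow> f (x \<ominus> y) = f x \<ominus>\<^bsub>R\<^esub> f y"
proof -
  assume xy: "x \<in> carrier S" "y \<in> carrier S"
  interpret fh: ring_hom_ring S R f by (rule fhom)
  show ?thesis using xy by (simp add: a_minus_def)
qed
lemma fone: "f \<one> = \<one>\<^bsub>R\<^esub>" using ring_hom_one[OF f] .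
lemma fzero: "f \<zero> = \<zero>\<^bsub>R\<^esub>" using ring_hom_zero[OF f ring_axioms cring.axioms(1)[OF Rc]] .
lemma fcar: "x \<in> carrier S \<Longrightarrow> f x \<in> carrier R" using ring_hom_closed[OF f] .

lemma fGS: assumes "(a,b,c,d) \<in> GS" shows "m2map f (a,b,c,d) \<in> congr_sub R IR"
proof -
  have h: "a \<in> carrier S" "d \<in> carrier S" "a \<ominus> \<one> \<in> IS" "b \<in> IS" "c \<in> IS" "d \<ominus> \<one> \<in> IS"
    using assms congr_sub_iff[OF IS] by auto
  have "f (a \<ominus> \<one>) \<in> IR" "f (d \<ominus> \<one>) \<in> IR" "f b \<in> IR" "f c \<in> IR" using h f_IS by auto
  then show ?thesis unfolding m2map.simps cring.congr_sub_iff[OF Rc IR] using h fminus fone fcar by auto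
qed

lemma red_GR: assumes "(a,b,c,d) \<in> congr_sub R IR"
  shows "m2map (\<lambda>x. phiR (IR +>\<^bsub>R\<^esub> x)) (a,b,c,d) = \<one>\<^bsub>GL2 (Zp p)\<^esub>"
proof -
  have h: "a \<in> carrier R" "d \<in> carrier R" "a \<ominus>\<^bsub>R\<^esub> \<one>\<^bsub>R\<^esub> \<in> IR" "b \<in> IR" "c \<in> IR" "d \<ominus>\<^bsub>R\<^esub> \<one>\<^bsub>R\<^esub> \<in> IR"
    using assms cring.congr_sub_iff[OF Rc IR] by auto
  have o: "IR +>\<^bsub>R\<^esub> a = IR +>\<^bsub>R\<^esub> \<one>\<^bsub>R\<^esub>" "IR +>\<^bsub>R\<^esub> d = IR +>\<^bsub>R\<^esub> \<one>\<^bsub>R\<^esub>"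
    using cring.cong_kappa[OF Rc IR] h ring.ring_simprules(6)[OF cring.axioms(1)[OF Rc]] by auto
  have one: "phiR (IR +>\<^bsub>R\<^esub> \<one>\<^bsub>R\<^esub>) = \<one>\<^bsub>Zp p\<^esub>"
    using ring_hom_one[OF zp_quot.phi_hom[OF zpR]] by (simp add: FactRing_def)
  have z: "phiR (IR +>\<^bsub>R\<^esub> b) = \<zero>\<^bsub>Zp p\<^esub>" "phiR (IR +>\<^bsub>R\<^esub> c) = \<zero>\<^bsub>Zp p\<^esub>"
    using zp_quot.psi_zero[OF zpR] h by auto
  show ?thesis unfolding m2map.simps o one z GL2_one ..
qed

lemma GR_Gt: "congr_sub R IR \<subseteq> Gt"
proof
  fix x assume x: "x \<in> congr_sub R IR"
  obtain a b c d where xe: "x = (a,b,c,d)" by (cases x)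
  have "m2map (\<lambda>x. phiR (IR +>\<^bsub>R\<^esub> x)) x \<in> Phi"
    unfolding xe red_GR[OF x[unfolded xe]] using subgroup.one_closed[OF Phi] .
  then show "x \<in> Gt" using x GR_car by (auto simp: Gtdef_def)
qed

lemma fGS_Gt: "g \<in> GS \<Longrightarrow> m2map f g \<in> Gt"
  using fGS GR_Gt by (cases g) auto

lemma m2map_mult:
  assumes "x \<in> carrier (GL2 S)" "y \<in> carrier (GL2 S)"
  shows "m2map f (x \<otimes>\<^bsub>GL2 S\<^esub> y) = m2map f x \<otimes>\<^bsub>GL2 R\<^esub> m2map f y"
proof -
  obtain a b c d where xe: "x = (a,b,c,d)" by (cases x)
  obtain e g k l where ye: "y = (e,g,k,l)" by (cases y)
  have c: "a \<in> carrier S" "b \<in> carrier S" "c \<in> carrier S" "d \<in> carrier S"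
     "e \<in> carrier S" "g \<in> carrier S" "k \<in> carrier S" "l \<in> carrier S" using assms xe ye by (auto simp: GL2_mem)
  show ?thesis unfolding xe ye GL2_mult m2mult.simps m2map.simps
    using c by (simp add: ring_hom_add[OF f] ring_hom_mult[OF f])
qed

definition pi where "pi g = h (m2map f g)"

lemma pi_car: "g \<in> GS \<Longrightarrow> pi g \<in> carrier (GL2 S)"
  unfolding pi_def using hom_in_carrier[OF hhom] fGS_Gt by simp

lemma pi_lift: "g \<in> GS \<Longrightarrow> m2map f (pi g) = m2map f g"
  unfolding pi_def using lift fGS_Gt by blast

lemma pi_mult: "g \<in> GS \<Longrightarrow> g' \<in> GS \<Longrightarrow> pi (g \<otimes>\<^bsub>GL2 S\<^esub> g') = pi g \<otimes>\<^bsub>GL2 S\<^esub> pi g'"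
proof -
  assume g: "g \<in> GS" "g' \<in> GS"
  have gc: "g \<in> carrier (GL2 S)" "g' \<in> carrier (GL2 S)" using g subgroup.mem_carrier[OF GS_sub] by auto
  have "pi (g \<otimes>\<^bsub>GL2 S\<^esub> g') = h (m2map f g \<otimes>\<^bsub>GL2 R\<^esub> m2map f g')"
    unfolding pi_def m2map_mult[OF gc] ..
  also have "\<dots> = h (m2map f g \<otimes>\<^bsub>(GL2 R)\<lparr>carrier := Gt\<rparr>\<^esub> m2map f g')" by simp
  also have "\<dots> = pi g \<otimes>\<^bsub>GL2 S\<^esub> pi g'"
    unfolding pi_def using hom_mult[OF hhom] fGS_Gt g by simp
  finally show ?thesis .
qed

lemma one_GS: "\<one>\<^bsub>GL2 S\<^esub> \<in> GS" using subgroup.one_closed[OF GS_sub] .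

lemma pi_one: "pi \<one>\<^bsub>GL2 S\<^esub> = \<one>\<^bsub>GL2 S\<^esub>"
proof -
  have "pi \<one>\<^bsub>GL2 S\<^esub> \<otimes>\<^bsub>GL2 S\<^esub> pi \<one>\<^bsub>GL2 S\<^esub> = pi \<one>\<^bsub>GL2 S\<^esub>"
    using pi_mult[OF one_GS one_GS] group.is_monoid[OF GLS] monoid.l_one[of "GL2 S"] monoid.one_closed[of "GL2 S"] by metis
  then show ?thesis using group.l_cancel_one[OF GLS] pi_car[OF one_GS] by blast
qed


lemma idl_sub: "ideal I S \<Longrightarrow> x \<in> I \<Longrightarrow> y \<in> I \<Longrightarrow> x \<ominus> y \<in> I"
  unfolding a_minus_def by (intro idl_add idl_neg)

lemma pi_props:
  assumes g: "g \<in> GS"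
  shows "pi g \<in> GS" "\<And>i. ent i g \<ominus> ent i (pi g) \<in> J"
proof -
  obtain a b c d where ge: "g = (a,b,c,d)" by (cases g)
  obtain a' b' c' d' where pe: "pi g = (a',b',c',d')" by (cases "pi g")
  have h: "a \<in> carrier S" "d \<in> carrier S" "a \<ominus> \<one> \<in> IS" "b \<in> IS" "c \<in> IS" "d \<ominus> \<one> \<in> IS"
    using g ge congr_sub_iff[OF IS] by auto
  have bc: "b \<in> carrier S" "c \<in> carrier S" using h idl_car[OF IS] by auto
  have pc: "a' \<in> carrier S" "b' \<in> carrier S" "c' \<in> carrier S" "d' \<in> carrier S"
    using pi_car[OF g] pe by (auto simp: GL2_mem)
  have eq: "f a = f a'" "f b = f b'" "f c = f c'" "f d = f d'" using pi_lift[OF g] ge pe by auto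
  have Rr: "ring R" using cring.axioms(1)[OF Rc] .
  have k: "x \<in> carrier S \<Longrightarrow> y \<in> carrier S \<Longrightarrow> f x = f y \<Longrightarrow> x \<ominus> y \<in> J" for x y
    unfolding Jmem using fminus[of x y] ring.ring_simprules(16)[OF Rr fcar[of y]] by (simp add: a_minus_def)
  have dJ: "a \<ominus> a' \<in> J" "b \<ominus> b' \<in> J" "c \<ominus> c' \<in> J" "d \<ominus> d' \<in> J"
    using k h bc pc eq by auto
  have pe': "pi (a,b,c,d) = (a',b',c',d')" using pe ge by simp
  show "\<And>i. ent i g \<ominus> ent i (pi g) \<in> J" using dJ by (simp add: ge pe')
  have dI: "a \<ominus> a' \<in> IS" "b \<ominus> b' \<in> IS" "c \<ominus> c' \<in> IS" "d \<ominus> d' \<in> IS" using dJ J_sub_IS by auto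
  have "a' \<ominus> \<one> = (a \<ominus> \<one>) \<ominus> (a \<ominus> a')" "d' \<ominus> \<one> = (d \<ominus> \<one>) \<ominus> (d \<ominus> d')"
    "b' = b \<ominus> (b \<ominus> b')" "c' = c \<ominus> (c \<ominus> c')" using h bc pc by algebra+
  moreover have "(a \<ominus> \<one>) \<ominus> (a \<ominus> a') \<in> IS" "(d \<ominus> \<one>) \<ominus> (d \<ominus> d') \<in> IS"
    "b \<ominus> (b \<ominus> b') \<in> IS" "c \<ominus> (c \<ominus> c') \<in> IS"
    using h dI idl_sub[OF IS] by auto
  ultimately show "pi g \<in> GS" unfolding pe congr_sub_iff[OF IS] using pc by simp
qed


definition mS where "mS = (THE m. maximalideal m S)"
lemma mS: "maximalideal mS S"
proof -
  have "\<exists>!m. maximalideal m S" using locS by (simp add: local_ring_def)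
  then show ?thesis unfolding mS_def by (rule theI')
qed

lemma IS_m: "IS \<subseteq> mS" using local_proper_sub[OF locS mS IS oneS] .
lemma p_m: "add_pow S p \<one> \<in> mS"
  using local_nonunit[OF locS mS _ zp_quot.p_nonunit[OF zpS]] by simp

definition Kset where "Kset = {K. ideal K S \<and> K \<subseteq> J \<and> K \<noteq> J}"
definition MM where "MM = (SOME K. K \<in> Kset \<and> (\<forall>b\<in>Kset. K \<subseteq> b \<longrightarrow> K = b))"

lemma MM_ex: "MM \<in> Kset \<and> (\<forall>b\<in>Kset. MM \<subseteq> b \<longrightarrow> MM = b)"
proof -
  have "Kset \<subseteq> Pow J" by (auto simp: Kset_def)
  then have fin: "finite Kset" using Jfin finite_Pow_iff rev_finite_subset by metis
  have "{\<zero>} \<subseteq> J" using idl_zero[OF Jideal] by simp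
  then have "{\<zero>} \<in> Kset" using zeroideal Jnz by (auto simp: Kset_def)
  then have "Kset \<noteq> {}" by blast
  then have "\<exists>K\<in>Kset. \<forall>b\<in>Kset. K \<subseteq> b \<longrightarrow> K = b" using finite_has_maximal[OF fin] by blast
  then have "\<exists>K. K \<in> Kset \<and> (\<forall>b\<in>Kset. K \<subseteq> b \<longrightarrow> K = b)" by blast
  then show ?thesis unfolding MM_def by (rule someI_ex)
qed

lemma MM: "ideal MM S" "MM \<subseteq> J" "MM \<noteq> J" using MM_ex by (auto simp: Kset_def)
lemma MM_max: "ideal K S \<Longrightarrow> MM \<subseteq> K \<Longrightarrow> K \<subseteq> J \<Longrightarrow> K = MM \<or> K = J"
  using MM_ex by (auto simp: Kset_def)

lemma MM_prop:
  assumes a: "a \<in> mS" and y: "y \<in> J"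
  shows "a \<otimes> y \<in> MM"
proof (rule ccontr)
  assume nin: "a \<otimes> y \<notin> MM"
  have ac: "a \<in> carrier S" by (rule ideal.Icarr[OF maximalideal.axioms(1)[OF mS] a])
  have yc: "y \<in> carrier S" using y Jmem by blast
  have ayJ: "a \<otimes> y \<in> J" using idl_lmul[OF Jideal ac y] .
  have ayc: "a \<otimes> y \<in> carrier S" using ac yc by simp
  let ?K = "set_add S MM (PIdl (a \<otimes> y))"
  have Kid: "ideal ?K S" using add_ideals[OF MM(1) cgenideal_ideal[OF ayc]] .
  have KJ: "?K \<subseteq> J"
  proof
    fix z assume "z \<in> ?K"
    then obtain u v where uv: "u \<in> MM" "v \<in> PIdl (a \<otimes> y)" "z = u \<oplus> v" unfolding set_add_def' by blast
    obtain s where s: "s \<in> carrier S" "v = s \<otimes> (a \<otimes> y)" using uv(2) by (auto simp: cgenideal_def)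
    have "v \<in> J" using s idl_lmul[OF Jideal s(1) ayJ] by simp
    moreover have "u \<in> J" using uv(1) MM(2) by blast
    ultimately show "z \<in> J" using uv(3) idl_add[OF Jideal] by simp
  qed
  have MK: "MM \<subseteq> ?K"
  proof
    fix u assume u: "u \<in> MM"
    have "\<zero> \<in> PIdl (a \<otimes> y)" using idl_zero[OF cgenideal_ideal[OF ayc]] .
    moreover have "u = u \<oplus> \<zero>" using u idl_car[OF MM(1)] by simp
    ultimately show "u \<in> ?K" using u unfolding set_add_def' by blast
  qed
  have "a \<otimes> y \<in> ?K"
  proof -
    have "a \<otimes> y \<in> PIdl (a \<otimes> y)" using cgenideal_self[OF ayc] .
    moreover have "a \<otimes> y = \<zero> \<oplus> a \<otimes> y" using ayc by simp
    ultimately show ?thesis using idl_zero[OF MM(1)] unfolding set_add_def' by blast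
  qed
  then have "?K \<noteq> MM" using nin by blast
  then have "?K = J" using MM_max[OF Kid MK KJ] by blast
  then have "y \<in> ?K" using y by simp
  then obtain u v where uv: "u \<in> MM" "v \<in> PIdl (a \<otimes> y)" "y = u \<oplus> v" unfolding set_add_def' by blast
  obtain s where s: "s \<in> carrier S" "v = s \<otimes> (a \<otimes> y)" using uv(2) by (auto simp: cgenideal_def)
  have uc: "u \<in> carrier S" using uv(1) idl_car[OF MM(1)] by blast
  have "(\<one> \<ominus> s \<otimes> a) \<otimes> y = y \<ominus> s \<otimes> (a \<otimes> y)" using s(1) ac yc by algebra
  also have "\<dots> = (u \<oplus> s \<otimes> (a \<otimes> y)) \<ominus> s \<otimes> (a \<otimes> y)" using uv(3) s(2) by simp
  also have "\<dots> = u" using s(1) ac yc uc by algebra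
  finally have eq: "(\<one> \<ominus> s \<otimes> a) \<otimes> y = u" .
  have un: "\<one> \<ominus> s \<otimes> a \<in> Units S" using local_unit_minus[OF locS mS a s(1)] .
  have "y = inv (\<one> \<ominus> s \<otimes> a) \<otimes> ((\<one> \<ominus> s \<otimes> a) \<otimes> y)"
    using un yc by (simp add: m_assoc[symmetric] Units_l_inv Units_inv_closed Units_closed)
  also have "\<dots> = inv (\<one> \<ominus> s \<otimes> a) \<otimes> u" using eq by simp
  finally have "y \<in> MM" using idl_lmul[OF MM(1) _ uv(1)] un by simp
  then have "a \<otimes> y \<in> MM" using idl_lmul[OF MM(1) ac] by simp
  then show False using nin by blast
qed

lemma JI_M: "\<forall>x\<in>J. \<forall>y\<in>IS. x \<otimes> y \<in> MM"
proof (intro ballI)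
  fix x y assume x: "x \<in> J" and y: "y \<in> IS"
  have "y \<otimes> x \<in> MM" using MM_prop[OF _ x] IS_m y by blast
  moreover have "y \<otimes> x = x \<otimes> y" using m_comm[OF idl_car[OF IS y] idl_car[OF Jideal x]] .
  ultimately show "x \<otimes> y \<in> MM" by simp
qed

lemma pJ_M: "y \<in> J \<Longrightarrow> add_pow S p y \<in> MM"
proof -
  assume y: "y \<in> J"
  have yc: "y \<in> carrier S" using y Jmem by blast
  have "add_pow S p \<one> \<otimes> y = add_pow S p (\<one> \<otimes> y)" using add_pow_ldistr[OF one_closed yc] .
  then have "add_pow S p y = add_pow S p \<one> \<otimes> y" using yc by simp
  then show ?thesis using MM_prop[OF p_m y] by simp
qed

lemma j0_ex: "\<exists>j0\<in>J. j0 \<notin> MM" using MM by blast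

end


context mainctx begin

abbreviation "Q \<equiv> S Quot MM"
definition dl where "dl i g = MM +> (ent i g \<ominus> ent i (pi g))"

lemma Qc: "cring Q" using ideal.quotient_is_cring[OF MM(1) is_cring] .
lemma kap: "(+>) MM \<in> ring_hom S Q" using ideal.rcos_ring_hom[OF MM(1)] .
lemma Qzero: "\<zero>\<^bsub>Q\<^esub> = MM" by (simp add: FactRing_def)

lemma GS_car: "g \<in> GS \<Longrightarrow> g \<in> carrier (GL2 S)" using subgroup.mem_carrier[OF GS_sub] .

lemma ent_car: "g \<in> carrier (GL2 S) \<Longrightarrow> ent i g \<in> carrier S"
  by (cases g) (auto simp: GL2_mem)

lemma dl_car: "g \<in> GS \<Longrightarrow> dl i g \<in> carrier Q"
  unfolding dl_def using ring_hom_closed[OF kap] ent_car GS_car pi_car by simp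

lemma dl_mult:
  assumes g: "g \<in> GS" and g': "g' \<in> GS"
  shows "dl i (g \<otimes>\<^bsub>GL2 S\<^esub> g') = dl i g \<oplus>\<^bsub>Q\<^esub> dl i g'"
proof -
  obtain x1 x2 x3 x4 where xe: "g = (x1,x2,x3,x4)" by (cases g)
  obtain y1 y2 y3 y4 where ye: "g' = (y1,y2,y3,y4)" by (cases g')
  obtain q1 q2 q3 q4 where qe: "pi g = (q1,q2,q3,q4)" by (cases "pi g")
  obtain r1 r2 r3 r4 where re: "pi g' = (r1,r2,r3,r4)" by (cases "pi g'")
  have cx: "x1 \<in> carrier S" "x2 \<in> carrier S" "x3 \<in> carrier S" "x4 \<in> carrier S"
    using GS_car[OF g] xe by (auto simp: GL2_mem)
  have cy: "y1 \<in> carrier S" "y2 \<in> carrier S" "y3 \<in> carrier S" "y4 \<in> carrier S"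
    using GS_car[OF g'] ye by (auto simp: GL2_mem)
  have cq: "q1 \<in> carrier S" "q2 \<in> carrier S" "q3 \<in> carrier S" "q4 \<in> carrier S"
    using pi_car[OF g] qe by (auto simp: GL2_mem)
  have cr: "r1 \<in> carrier S" "r2 \<in> carrier S" "r3 \<in> carrier S" "r4 \<in> carrier S"
    using pi_car[OF g'] re by (auto simp: GL2_mem)
  have Iy: "y1 \<ominus> \<one> \<in> IS" "y2 \<in> IS" "y3 \<in> IS" "y4 \<ominus> \<one> \<in> IS"
    using g' ye congr_sub_iff[OF IS] by auto
  have Iq: "q1 \<ominus> \<one> \<in> IS" "q2 \<in> IS" "q3 \<in> IS" "q4 \<ominus> \<one> \<in> IS"
    using pi_props(1)[OF g] qe congr_sub_iff[OF IS] by auto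
  have Jx: "x1 \<ominus> q1 \<in> J" "x2 \<ominus> q2 \<in> J" "x3 \<ominus> q3 \<in> J" "x4 \<ominus> q4 \<in> J"
    using pi_props(2)[OF g, of 0] pi_props(2)[OF g, of 1] pi_props(2)[OF g, of 2] pi_props(2)[OF g, of 3]
    unfolding qe unfolding xe by simp_all
  have Jy: "y1 \<ominus> r1 \<in> J" "y2 \<ominus> r2 \<in> J" "y3 \<ominus> r3 \<in> J" "y4 \<ominus> r4 \<in> J"
    using pi_props(2)[OF g', of 0] pi_props(2)[OF g', of 1] pi_props(2)[OF g', of 2] pi_props(2)[OF g', of 3]
    unfolding re unfolding ye by simp_all
  have pm: "pi (g \<otimes>\<^bsub>GL2 S\<^esub> g') = m2mult S (q1,q2,q3,q4) (r1,r2,r3,r4)"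
    using pi_mult[OF g g'] qe re by (simp add: GL2_mult)
  have gm: "g \<otimes>\<^bsub>GL2 S\<^esub> g' = m2mult S (x1,x2,x3,x4) (y1,y2,y3,y4)" using xe ye by (simp add: GL2_mult)
  let ?X = "ent i (m2mult S (x1,x2,x3,x4) (y1,y2,y3,y4)) \<ominus> ent i (m2mult S (q1,q2,q3,q4) (r1,r2,r3,r4))"
  let ?D1 = "ent i (x1,x2,x3,x4) \<ominus> ent i (q1,q2,q3,q4)"
  let ?D2 = "ent i (y1,y2,y3,y4) \<ominus> ent i (r1,r2,r3,r4)"
  have key: "?X \<ominus> (?D1 \<oplus> ?D2) \<in> MM"
    using mat_key[OF IS Jideal MM(1) JI_M cx cy cq cr Iy Iq Jx Jy] .
  have c1: "?D1 \<in> carrier S" "?D2 \<in> carrier S" using cx cy cq cr by simp_all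
  have c2: "?X \<in> carrier S" using cx cy cq cr by simp
  have "MM +> ?X = MM +> (?D1 \<oplus> ?D2)" using cong_kappa[OF MM(1) c2 _ key] c1 by simp
  also have "\<dots> = (MM +> ?D1) \<oplus>\<^bsub>Q\<^esub> (MM +> ?D2)" using ring_hom_add[OF kap c1] .
  finally have "MM +> ?X = (MM +> ?D1) \<oplus>\<^bsub>Q\<^esub> (MM +> ?D2)" .
  then show ?thesis unfolding dl_def unfolding pm unfolding qe re unfolding gm unfolding xe ye .
qed


lemma MM_zero: "y \<in> MM \<Longrightarrow> MM +> y = \<zero>\<^bsub>Q\<^esub>"
  using a_rcos_zero[OF MM(1)] Qzero by simp

lemma dl_one: "dl i \<one>\<^bsub>GL2 S\<^esub> = \<zero>\<^bsub>Q\<^esub>"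
proof -
  have c: "ent i \<one>\<^bsub>GL2 S\<^esub> \<in> carrier S" using ent_car[OF GS_car[OF one_GS]] .
  have "ent i \<one>\<^bsub>GL2 S\<^esub> \<ominus> ent i \<one>\<^bsub>GL2 S\<^esub> = \<zero>" using c by (simp add: a_minus_def r_neg)
  then show ?thesis unfolding dl_def pi_one using MM_zero idl_zero[OF MM(1)] by simp
qed

lemma dl_inv: "x \<in> GS \<Longrightarrow> dl i x \<oplus>\<^bsub>Q\<^esub> dl i (inv\<^bsub>GL2 S\<^esub> x) = \<zero>\<^bsub>Q\<^esub>"
proof -
  assume x: "x \<in> GS"
  have ix: "inv\<^bsub>GL2 S\<^esub> x \<in> GS" using subgroup.m_inv_closed[OF GS_sub x] .
  have "x \<otimes>\<^bsub>GL2 S\<^esub> inv\<^bsub>GL2 S\<^esub> x = \<one>\<^bsub>GL2 S\<^esub>" using group.r_inv[OF GLS GS_car[OF x]] .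
  then show ?thesis using dl_mult[OF x ix, of i] dl_one by simp
qed

lemma dl_pow: "a \<in> GS \<Longrightarrow> dl i (a [^]\<^bsub>GL2 S\<^esub> (n::nat)) = add_pow Q n (dl i a)"
proof (induction n)
  case 0
  then show ?case using dl_one by (simp add: add_pow_def)
next
  case (Suc n)
  have "dl i (a [^]\<^bsub>GL2 S\<^esub> Suc n) = dl i (a [^]\<^bsub>GL2 S\<^esub> n \<otimes>\<^bsub>GL2 S\<^esub> a)" by simp
  also have "\<dots> = dl i (a [^]\<^bsub>GL2 S\<^esub> n) \<oplus>\<^bsub>Q\<^esub> dl i a" using dl_mult[OF pow_in_GS[OF Suc.prems] Suc.prems] .
  also have "\<dots> = add_pow Q (Suc n) (dl i a)" using Suc by (simp add: add_pow_def)
  finally show ?case .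
qed

lemma dl_p: "a \<in> GS \<Longrightarrow> add_pow Q p (dl i a) = \<zero>\<^bsub>Q\<^esub>"
proof -
  assume a: "a \<in> GS"
  let ?e = "ent i a \<ominus> ent i (pi a)"
  have ec: "?e \<in> carrier S" using ent_car GS_car[OF a] pi_car[OF a] by simp
  have eJ: "?e \<in> J" using pi_props(2)[OF a] .
  have "add_pow Q p (MM +> ?e) = MM +> add_pow S p ?e"
    using ring_hom_add_pow[OF ring_axioms cring.axioms(1)[OF Qc] kap ec] by simp
  also have "\<dots> = \<zero>\<^bsub>Q\<^esub>" using MM_zero pJ_M[OF eJ] by simp
  finally show ?thesis unfolding dl_def .
qed

abbreviation "gens \<equiv> derived_set (GL2 S) GS \<union> {x [^]\<^bsub>GL2 S\<^esub> p |x. x \<in> GS}"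

lemma gens_ok: "z \<in> gens \<Longrightarrow> z \<in> GS \<and> (\<forall>i. dl i z = \<zero>\<^bsub>Q\<^esub>)"
proof -
  interpret Qr: cring Q by (rule Qc)
  assume "z \<in> gens"
  then show ?thesis
  proof
    assume "z \<in> derived_set (GL2 S) GS"
    then obtain a b where ab: "a \<in> GS" "b \<in> GS"
      "z = a \<otimes>\<^bsub>GL2 S\<^esub> b \<otimes>\<^bsub>GL2 S\<^esub> inv\<^bsub>GL2 S\<^esub> a \<otimes>\<^bsub>GL2 S\<^esub> inv\<^bsub>GL2 S\<^esub> b" by blast
    have ia: "inv\<^bsub>GL2 S\<^esub> a \<in> GS" and ib: "inv\<^bsub>GL2 S\<^esub> b \<in> GS"
      using subgroup.m_inv_closed[OF GS_sub] ab by auto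
    have ab1: "a \<otimes>\<^bsub>GL2 S\<^esub> b \<in> GS" using subgroup.m_closed[OF GS_sub ab(1,2)] .
    have ab2: "a \<otimes>\<^bsub>GL2 S\<^esub> b \<otimes>\<^bsub>GL2 S\<^esub> inv\<^bsub>GL2 S\<^esub> a \<in> GS" using subgroup.m_closed[OF GS_sub ab1 ia] .
    have zG: "z \<in> GS" using subgroup.m_closed[OF GS_sub ab2 ib] ab(3) by simp
    have "dl i z = dl i a \<oplus>\<^bsub>Q\<^esub> dl i b \<oplus>\<^bsub>Q\<^esub> dl i (inv\<^bsub>GL2 S\<^esub> a) \<oplus>\<^bsub>Q\<^esub> dl i (inv\<^bsub>GL2 S\<^esub> b)" for i
      unfolding ab(3) dl_mult[OF ab2 ib] dl_mult[OF ab1 ia] dl_mult[OF ab(1,2)] ..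
    also have "\<dots> i = (dl i a \<oplus>\<^bsub>Q\<^esub> dl i (inv\<^bsub>GL2 S\<^esub> a)) \<oplus>\<^bsub>Q\<^esub> (dl i b \<oplus>\<^bsub>Q\<^esub> dl i (inv\<^bsub>GL2 S\<^esub> b))" for i
      using dl_car ab ia ib by (simp add: Qr.a_ac)
    also have "\<dots> i = \<zero>\<^bsub>Q\<^esub>" for i using dl_inv ab by simp
    finally show ?thesis using zG by simp
  next
    assume "z \<in> {x [^]\<^bsub>GL2 S\<^esub> p |x. x \<in> GS}"
    then obtain a where a: "a \<in> GS" "z = a [^]\<^bsub>GL2 S\<^esub> p" by blast
    then show ?thesis using pow_in_GS dl_pow dl_p by simp
  qed
qed

lemma gen_ok: "g \<in> generate (GL2 S) gens \<Longrightarrow> g \<in> GS \<and> (\<forall>i. dl i g = \<zero>\<^bsub>Q\<^esub>)"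
proof (induction rule: generate.induct)
  case one
  then show ?case using one_GS dl_one by simp
next
  case (incl h)
  then show ?case using gens_ok by blast
next
  case (inv h)
  then have h: "h \<in> GS" "\<forall>i. dl i h = \<zero>\<^bsub>Q\<^esub>" using gens_ok by blast+
  have ih: "inv\<^bsub>GL2 S\<^esub> h \<in> GS" using subgroup.m_inv_closed[OF GS_sub h(1)] .
  have "dl i (inv\<^bsub>GL2 S\<^esub> h) = \<zero>\<^bsub>Q\<^esub>" for i
    using dl_inv[OF h(1), of i] h(2) ring.ring_simprules(8)[OF cring.axioms(1)[OF Qc] dl_car[OF ih]] by simp
  then show ?case using ih by simp
next
  case (eng h1 h2)
  then show ?case using subgroup.m_closed[OF GS_sub] dl_mult
    ring.ring_simprules(8)[OF cring.axioms(1)[OF Qc]] ring.ring_simprules(2)[OF cring.axioms(1)[OF Qc]] by simp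
qed

lemma contradiction: False
proof -
  obtain j0 where j0: "j0 \<in> J" "j0 \<notin> MM" using j0_ex by blast
  have jc: "j0 \<in> carrier S" using j0 Jmem by blast
  have oo: "\<one> \<ominus> \<one> = \<zero>" by algebra
  have jj: "(\<one> \<oplus> j0) \<ominus> \<one> = j0" using jc by algebra
  have "(\<one> \<oplus> j0, \<zero>, \<zero>, \<one>) \<in> congr_sub S J"
    unfolding congr_sub_iff[OF Jideal] oo jj using j0 jc idl_zero[OF Jideal] by simp
  then have g0: "(\<one> \<oplus> j0, \<zero>, \<zero>, \<one>) \<in> generate (GL2 S) gens" using hyp by (auto simp: comm_pow_sub_def)
  have "m2map f (\<one> \<oplus> j0, \<zero>, \<zero>, \<one>) = m2map f \<one>\<^bsub>GL2 S\<^esub>"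
  proof -
    have "f j0 = \<zero>\<^bsub>R\<^esub>" using j0 Jmem by blast
    then have "f (\<one> \<oplus> j0) = \<one>\<^bsub>R\<^esub>" using ring_hom_add[OF f one_closed jc] fone
      ring.ring_simprules(15)[OF cring.axioms(1)[OF Rc]] ring.ring_simprules(6)[OF cring.axioms(1)[OF Rc]] by simp
    then show ?thesis by (simp add: GL2_one fone fzero)
  qed
  then have "pi (\<one> \<oplus> j0, \<zero>, \<zero>, \<one>) = \<one>\<^bsub>GL2 S\<^esub>" using pi_one unfolding pi_def by simp
  then have "dl 0 (\<one> \<oplus> j0, \<zero>, \<zero>, \<one>) = MM +> j0" unfolding dl_def using jj by (simp add: GL2_one)
  moreover have "dl 0 (\<one> \<oplus> j0, \<zero>, \<zero>, \<one>) = \<zero>\<^bsub>Q\<^esub>" using gen_ok[OF g0] by blast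
  ultimately have "MM +> j0 = MM" using Qzero by simp
  then have "j0 \<in> MM" using ideal.rcos_const_imp_mem[OF MM(1) jc] by blast
  then show False using j0 by blast
qed

end


theorem mainTheorem12:
  fixes S :: "('a, 'c) ring_scheme" and R :: "('b, 'd) ring_scheme"
    and IS :: "'a set" and IR :: "'b set"
    and p :: nat
    and phiS :: "'a set \<Rightarrow> (nat \<Rightarrow> int)" and phiR :: "'b set \<Rightarrow> (nat \<Rightarrow> int)"
    and f :: "'a \<Rightarrow> 'b"
    and Phi :: "(nat \<Rightarrow> int) mat2 set"
  assumes "Factorial_Ring.prime p"
    and "local_ring S" and "local_ring R"
    and "ideal IS S" and "finite IS"
    and "ideal IR R" and "finite IR"
    and "phiS \<in> ring_iso (S Quot IS) (Zp p)"
    and "phiR \<in> ring_iso (R Quot IR) (Zp p)"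
    and "f \<in> ring_hom S R" and "f ` carrier S = carrier R"
    and "finite (a_kernel S R f)" and "a_kernel S R f \<noteq> {\<zero>\<^bsub>S\<^esub>}"
    and "subgroup Phi (GL2 (Zp p))" and "finite Phi" and "coprime (card Phi) p"
    and "congr_sub S (a_kernel S R f) \<subseteq> comm_pow_sub (GL2 S) (congr_sub S IS) p"
  shows "\<not> (\<exists>h. let Gt = {M \<in> carrier (GL2 R). m2map (\<lambda>x. phiR (IR +>\<^bsub>R\<^esub> x)) M \<in> Phi} in
                h \<in> hom ((GL2 R)\<lparr>carrier := Gt\<rparr>) (GL2 S)
                \<and> (\<forall>M \<in> Gt. m2map f (h M) = M))"
proof
  assume "\<exists>h. let Gt = {M \<in> carrier (GL2 R). m2map (\<lambda>x. phiR (IR +>\<^bsub>R\<^esub> x)) M \<in> Phi} in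
                h \<in> hom ((GL2 R)\<lparr>carrier := Gt\<rparr>) (GL2 S)
                \<and> (\<forall>M \<in> Gt. m2map f (h M) = M)"
  then obtain h where hh: "h \<in> hom ((GL2 R)\<lparr>carrier := Gtdef R IR phiR Phi\<rparr>) (GL2 S)"
    "\<forall>M\<in>Gtdef R IR phiR Phi. m2map f (h M) = M"
    unfolding Let_def Gtdef_def by blast
  have cS: "cring S" using assms(2) local_cring by blast
  interpret mc: mainctx S R IS IR p phiS phiR f Phi h
    by (rule mainctx.intro[OF cS], rule mainctx_axioms.intro) (use assms hh in auto)
  show False by (rule mc.contradiction)
qed

end
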